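(* There exist unique polynomials $A_k(a,b,c,d)$ and $B_k(a,b)$ with rational coefficients ($k\ge-1$) such that $A_{-1}=0$, $B_{-1}=0$ and, for all $k\ge0$, \[ (k+2)(a-b+c-d)A_k(a,b,c,d)=\frac{a^2-b^2+c^2-d^2}{2}A_{k-1}(a,b,c,d)-P_k(a,b,c,d), \] \[ (k+2)(a-b)B_k(a,b)=\frac{a^2-b^2}{2}B_{k-1}(a,b)-R_k(a,b)-T_k(a,b). \] Moreover, for all $k\ge1$ the polynomial $A_k$ has degree $k+1$; for all $k\ge0$ the polynomial $B_k$ has degree $k+2$; for all $k\ge0$ one has the identity of rational functions \[ A_k(a,b,c,a+c-b)=\frac{1}{(k+1)!}(a-b)\,\frac{a^{k+1}-b^{k+1}+c^{k+1}-(a+c-b)^{k+1}}{b-c}, \] and \[ B_k(a,a)=\frac{k(k+3)}{(k+2)!}a^{k+2}-\frac{1}{12\,k!}a^k+2\beta_{k+1}a-2(k+1)\beta_{k+2}. \]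
   Context: For $k\ge0$: $P_k(a,b,c,d)=\frac{1}{k!\,2^k}\Bigl((a-b)^2\bigl((-a+b+c+d)^k-(a-b+c+d)^k\bigr)+(c-d)^2\bigl((a+b-c+d)^k-(a+b+c-d)^k\bigr)\Bigr)$; $R_k(a,b)=[\zeta^k]\,\mathrm e^{\zeta(a-b)/2}\bigl((b-\partial_\zeta)^2-(a-b)^2\bigr)\frac{1-\mathrm e^{-(a-b)\zeta}}{\sinh(\zeta/2)}$, where the differential operator acts on the power series $\frac{1-\mathrm e^{-(a-b)\zeta}}{\sinh(\zeta/2)}\in\mathbb Q[a,b][[\zeta]]$ and $[\zeta^k]$ extracts the coefficient of $\zeta^k$; $T_k(a,b)=\frac{2}{3\,k!}\bigl(b(b^2-\tfrac14)-a(a^2-\tfrac14)\bigr)\bigl(\frac{a+b}{2}\bigr)^k$. The rationals $\beta_k$ are defined by $\sum_{k\ge0}\beta_ky^k=\frac{y/2}{\sinh(y/2)}$. *)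

theory Defs
  imports "HOL-Library.Poly_Mapping" "HOL-Computational_Algebra.Formal_Power_Series"
begin

text \<open>A polynomial with rational coefficients in the variables indexed by nat
  (a = variable 0, b = variable 1, c = variable 2, d = variable 3) is a finitely
  supported map from monomials (exponent vectors, finitely supported nat to nat)
  to rational coefficients.\<close>

type_synonym mpoly = "(nat \<Rightarrow>\<^sub>0 nat) \<Rightarrow>\<^sub>0 rat"

definition Var :: "nat \<Rightarrow> mpoly" where
  "Var i = Poly_Mapping.single (Poly_Mapping.single i 1) 1"

definition Const :: "rat \<Rightarrow> mpoly" where
  "Const r = Poly_Mapping.single 0 r"

abbreviation "Xa \<equiv> Var 0"
abbreviation "Xb \<equiv> Var 1"
abbreviation "Xc \<equiv> Var 2"
abbreviation "Xd \<equiv> Var 3"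

definition vars :: "mpoly \<Rightarrow> nat set" where
  "vars p = \<Union> (Poly_Mapping.keys ` Poly_Mapping.keys p)"

text \<open>Total degree (the zero polynomial gets degree 0).\<close>
definition total_degree :: "mpoly \<Rightarrow> nat" where
  "total_degree p = Max (insert 0
     ((\<lambda>m. sum (Poly_Mapping.lookup m) (Poly_Mapping.keys m)) ` Poly_Mapping.keys p))"

definition subst :: "(nat \<Rightarrow> mpoly) \<Rightarrow> mpoly \<Rightarrow> mpoly" where
  "subst f p = (\<Sum>m\<in>Poly_Mapping.keys p.
      Const (Poly_Mapping.lookup p m) *
      (\<Prod>i\<in>Poly_Mapping.keys m. f i ^ Poly_Mapping.lookup m i))"

definition exp_ser :: "(rat \<Rightarrow> 'a::comm_ring_1) \<Rightarrow> 'a \<Rightarrow> 'a fps" where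
  "exp_ser emb c = Abs_fps (\<lambda>n. emb (1 / fact n) * c ^ n)"

definition sinh_half :: "(rat \<Rightarrow> 'a::comm_ring_1) \<Rightarrow> 'a fps" where
  "sinh_half emb = Abs_fps (\<lambda>n. if odd n then emb (1 / (2 ^ n * fact n)) else 0)"

definition beta :: "nat \<Rightarrow> rat" where
  "beta k = fps_nth (THE f. f * sinh_half id = fps_const (1/2) * fps_X) k"

definition P :: "nat \<Rightarrow> mpoly" where
  "P k = Const (1 / (fact k * 2 ^ k)) *
     ((Xa - Xb)^2 * ((- Xa + Xb + Xc + Xd) ^ k - (Xa - Xb + Xc + Xd) ^ k)
      + (Xc - Xd)^2 * ((Xa + Xb - Xc + Xd) ^ k - (Xa + Xb + Xc - Xd) ^ k))"

definition Rquot :: "mpoly fps" where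
  "Rquot = (THE F. F * sinh_half Const = 1 - exp_ser Const (- (Xa - Xb)))"

definition Rop :: "mpoly fps \<Rightarrow> mpoly fps" where
  "Rop G = (let L = (\<lambda>H. fps_const Xb * H - fps_deriv H) in
            L (L G) - fps_const ((Xa - Xb)^2) * G)"

definition R :: "nat \<Rightarrow> mpoly" where
  "R k = fps_nth (exp_ser Const (Const (1/2) * (Xa - Xb)) * Rop Rquot) k"

definition T :: "nat \<Rightarrow> mpoly" where
  "T k = Const (2 / (3 * fact k)) *
     (Xb * (Xb^2 - Const (1/4)) - Xa * (Xa^2 - Const (1/4))) *
     (Const (1/2) * (Xa + Xb)) ^ k"

end

theory Submission
  imports Defs
begin

unbundle fps_syntax


lemma Const_mult: "Const a * Const b = Const (a*b)"
  unfolding Const_def by (simp add: mult_single)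
lemma Const_add: "Const a + Const b = Const (a+b)"
  unfolding Const_def by (simp add: single_add)
lemma Const_diff: "Const a - Const b = Const (a-b)"
  unfolding Const_def by (simp add: single_diff)
lemma Const_uminus: "- Const a = Const (-a)"
  unfolding Const_def by (simp add: single_uminus)
lemma Const_0 [simp]: "Const 0 = 0"
  unfolding Const_def by simp
lemma Const_1 [simp]: "Const 1 = 1"
  unfolding Const_def by simp
lemma Const_of_nat: "Const (of_nat n) = of_nat n"
  unfolding Const_def by simp
lemma Const_numeral: "Const (numeral n) = numeral n"
  unfolding Const_def by simp
lemma Const_power: "Const (a^n) = Const a ^ n"
  by (induction n) (simp_all add: Const_mult[symmetric])
lemma Const_sum: "Const (sum f A) = (\<Sum>x\<in>A. Const (f x))"
  by (induction A rule: infinite_finite_induct) (simp_all add: Const_add[symmetric])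
lemma Const_eq_iff [simp]: "Const a = Const b \<longleftrightarrow> a = b"
  unfolding Const_def by (simp add: inj_eq)
lemma Const_eq_0_iff [simp]: "Const a = 0 \<longleftrightarrow> a = 0"
  using Const_eq_iff[of a 0] by simp

definition mdeg :: "(nat \<Rightarrow>\<^sub>0 nat) \<Rightarrow> nat" where
  "mdeg m = sum (Poly_Mapping.lookup m) (Poly_Mapping.keys m)"

lemma mdeg_superset:
  assumes "finite S" "Poly_Mapping.keys m \<subseteq> S"
  shows "mdeg m = sum (Poly_Mapping.lookup m) S"
  unfolding mdeg_def
  by (rule sum.mono_neutral_left) (use assms in \<open>auto simp: in_keys_iff\<close>)

lemma mdeg_add: "mdeg (m1 + m2) = mdeg m1 + mdeg m2"
proof -
  let ?S = "Poly_Mapping.keys m1 \<union> Poly_Mapping.keys m2"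
  have "mdeg (m1+m2) = sum (Poly_Mapping.lookup (m1+m2)) ?S"
    by (rule mdeg_superset) (auto dest: keys_add[THEN subsetD])
  also have "\<dots> = sum (Poly_Mapping.lookup m1) ?S + sum (Poly_Mapping.lookup m2) ?S"
    by (simp add: lookup_add sum.distrib)
  also have "\<dots> = mdeg m1 + mdeg m2"
    by (subst (1 2) mdeg_superset[where S="?S"]) auto
  finally show ?thesis .
qed

lemma mdeg_0 [simp]: "mdeg 0 = 0"
  by (simp add: mdeg_def)
lemma mdeg_single [simp]: "mdeg (Poly_Mapping.single i n) = n"
  by (simp add: mdeg_def)

lemma pm_sum_single:
  "p = (\<Sum>m\<in>Poly_Mapping.keys p. Poly_Mapping.single m (Poly_Mapping.lookup p m))"
proof (rule poly_mapping_eqI)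
  fix k
  show "Poly_Mapping.lookup p k =
    Poly_Mapping.lookup (\<Sum>m\<in>Poly_Mapping.keys p. Poly_Mapping.single m (Poly_Mapping.lookup p m)) k"
    by (simp add: lookup_sum lookup_single when_def in_keys_iff)
qed

lemma lookup_Const_mult: "Poly_Mapping.lookup (Const c * p) m = c * Poly_Mapping.lookup p m"
proof -
  have "Const c * p = (\<Sum>m'\<in>Poly_Mapping.keys p. Poly_Mapping.single m' (c * Poly_Mapping.lookup p m'))"
    by (subst pm_sum_single) (simp add: sum_distrib_left Const_def mult_single)
  then show ?thesis
    by (simp add: lookup_sum lookup_single when_def in_keys_iff)
qed

section \<open>Substitution is a ring homomorphism\<close>

definition mon :: "(nat \<Rightarrow> mpoly) \<Rightarrow> (nat \<Rightarrow>\<^sub>0 nat) \<Rightarrow> mpoly" where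
  "mon f m = (\<Prod>i\<in>Poly_Mapping.keys m. f i ^ Poly_Mapping.lookup m i)"

lemma mon_superset:
  assumes "finite S" "Poly_Mapping.keys m \<subseteq> S"
  shows "mon f m = (\<Prod>i\<in>S. f i ^ Poly_Mapping.lookup m i)"
  unfolding mon_def
  by (rule prod.mono_neutral_left) (use assms in \<open>auto simp: in_keys_iff\<close>)

lemma mon_add: "mon f (m1 + m2) = mon f m1 * mon f m2"
proof -
  let ?S = "Poly_Mapping.keys m1 \<union> Poly_Mapping.keys m2"
  have "mon f (m1+m2) = (\<Prod>i\<in>?S. f i ^ Poly_Mapping.lookup (m1+m2) i)"
    by (rule mon_superset) (auto dest: keys_add[THEN subsetD])
  also have "\<dots> = (\<Prod>i\<in>?S. f i ^ Poly_Mapping.lookup m1 i) * (\<Prod>i\<in>?S. f i ^ Poly_Mapping.lookup m2 i)"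
    by (simp add: lookup_add power_add prod.distrib)
  also have "\<dots> = mon f m1 * mon f m2"
    by (subst (1 2) mon_superset[where S="?S"]) auto
  finally show ?thesis .
qed

lemma mon_0 [simp]: "mon f 0 = 1"
  by (simp add: mon_def)

lemma subst_mon: "subst f p = (\<Sum>m\<in>Poly_Mapping.keys p. Const (Poly_Mapping.lookup p m) * mon f m)"
  unfolding subst_def mon_def ..

lemma subst_superset:
  assumes "finite S" "Poly_Mapping.keys p \<subseteq> S"
  shows "subst f p = (\<Sum>m\<in>S. Const (Poly_Mapping.lookup p m) * mon f m)"
  unfolding subst_mon
  by (rule sum.mono_neutral_left) (use assms in \<open>auto simp: in_keys_iff\<close>)

lemma subst_add: "subst f (p + q) = subst f p + subst f q"
proof -
  let ?S = "Poly_Mapping.keys p \<union> Poly_Mapping.keys q"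
  have "subst f (p+q) = (\<Sum>m\<in>?S. Const (Poly_Mapping.lookup (p+q) m) * mon f m)"
    by (rule subst_superset) (auto dest: keys_add[THEN subsetD])
  also have "\<dots> = (\<Sum>m\<in>?S. Const (Poly_Mapping.lookup p m) * mon f m) + (\<Sum>m\<in>?S. Const (Poly_Mapping.lookup q m) * mon f m)"
    by (simp add: lookup_add Const_add[symmetric] distrib_right sum.distrib)
  also have "\<dots> = subst f p + subst f q"
    by (subst (1 2) subst_superset[where S="?S"]) auto
  finally show ?thesis .
qed

lemma subst_0 [simp]: "subst f 0 = 0"
  by (simp add: subst_def)

lemma subst_sum: "subst f (sum g A) = (\<Sum>x\<in>A. subst f (g x))"
  by (induction A rule: infinite_finite_induct) (simp_all add: subst_add)

lemma subst_single: "subst f (Poly_Mapping.single m c) = Const c * mon f m"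
  by (cases "c = 0") (simp_all add: subst_mon)

lemma subst_mult: "subst f (p * q) = subst f p * subst f q"
proof -
  have "p * q = (\<Sum>m\<in>Poly_Mapping.keys p. Poly_Mapping.single m (Poly_Mapping.lookup p m)) *
                (\<Sum>m\<in>Poly_Mapping.keys q. Poly_Mapping.single m (Poly_Mapping.lookup q m))"
    by (simp flip: pm_sum_single)
  also have "\<dots> = (\<Sum>m\<in>Poly_Mapping.keys p. \<Sum>m'\<in>Poly_Mapping.keys q.
       Poly_Mapping.single (m + m') (Poly_Mapping.lookup p m * Poly_Mapping.lookup q m'))"
    by (simp add: sum_distrib_left sum_distrib_right mult_single) (rule sum.swap)
  finally have "subst f (p*q) = (\<Sum>m\<in>Poly_Mapping.keys p. \<Sum>m'\<in>Poly_Mapping.keys q.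
       Const (Poly_Mapping.lookup p m) * mon f m * (Const (Poly_Mapping.lookup q m') * mon f m'))"
    by (simp add: subst_sum subst_single mon_add Const_mult[symmetric] mult_ac)
  also have "\<dots> = subst f p * subst f q"
    by (simp add: subst_mon sum_distrib_left sum_distrib_right) (rule sum.swap)
  finally show ?thesis .
qed

lemma subst_Const [simp]: "subst f (Const c) = Const c"
  by (simp add: Const_def subst_single)

lemma subst_1 [simp]: "subst f 1 = 1"
  using subst_Const[of f 1] by simp

lemma subst_uminus: "subst f (- p) = - subst f p"
  using subst_add[of f p "-p"] by (simp add: add_eq_0_iff2)

lemma subst_diff: "subst f (p - q) = subst f p - subst f q"
  using subst_add[of f p "-q"] by (simp add: subst_uminus)

lemma subst_power: "subst f (p ^ n) = subst f p ^ n"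
  by (induction n) (simp_all add: subst_mult)

lemma subst_of_nat [simp]: "subst f (of_nat n) = of_nat n"
  using subst_Const[of f "of_nat n"] by (simp add: Const_of_nat)

lemma subst_numeral [simp]: "subst f (numeral n) = numeral n"
  using subst_Const[of f "numeral n"] by (simp add: Const_numeral)

lemma subst_Var [simp]: "subst f (Var i) = f i"
  by (simp add: Var_def subst_single mon_def)

lemmas subst_simps = subst_add subst_mult subst_uminus subst_diff subst_power


lemma keys_uminus_pm: "Poly_Mapping.keys (- p) = Poly_Mapping.keys (p::mpoly)"
  by (auto simp: in_keys_iff)

lemma vars_add: "vars p \<subseteq> S \<Longrightarrow> vars q \<subseteq> S \<Longrightarrow> vars (p + q) \<subseteq> S"
  unfolding vars_def using keys_add[of p q] by blast

lemma vars_diff: "vars p \<subseteq> S \<Longrightarrow> vars q \<subseteq> S \<Longrightarrow> vars (p - q) \<subseteq> S"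
  unfolding vars_def using keys_diff[of p q] by blast

lemma vars_uminus: "vars p \<subseteq> S \<Longrightarrow> vars (- p) \<subseteq> S"
  unfolding vars_def by (simp add: keys_uminus_pm)

lemma vars_mult: "vars (p * q) \<subseteq> S" if "vars p \<subseteq> S" "vars q \<subseteq> S"
proof
  fix i assume "i \<in> vars (p*q)"
  then obtain m where m: "m \<in> Poly_Mapping.keys (p*q)" "i \<in> Poly_Mapping.keys m"
    unfolding vars_def by blast
  then obtain a b where ab: "m = a + b" "a \<in> Poly_Mapping.keys p" "b \<in> Poly_Mapping.keys q"
    using keys_mult[of p q] by blast
  then have "i \<in> Poly_Mapping.keys a \<or> i \<in> Poly_Mapping.keys b"
    using keys_add[of a b] m(2) by blast
  then show "i \<in> S" using ab that unfolding vars_def by blast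
qed

lemma vars_Const: "vars (Const c) \<subseteq> S"
  unfolding vars_def Const_def by auto

lemma vars_0: "vars 0 \<subseteq> S"
  unfolding vars_def by auto

lemma vars_1: "vars 1 \<subseteq> S"
  using vars_Const[of 1] by simp

lemma vars_of_nat: "vars (of_nat n) \<subseteq> S"
  using vars_Const[of "of_nat n"] by (simp add: Const_of_nat)

lemma vars_numeral: "vars (numeral n) \<subseteq> S"
  using vars_Const[of "numeral n"] by (simp add: Const_numeral)

lemma vars_Var: "i \<in> S \<Longrightarrow> vars (Var i) \<subseteq> S"
  unfolding vars_def Var_def by auto

lemma vars_power: "vars (p ^ n) \<subseteq> S" if "vars p \<subseteq> S"
  by (induction n) (simp_all add: vars_1 vars_mult that)

lemma vars_sum: "(\<And>x. x \<in> A \<Longrightarrow> vars (f x) \<subseteq> S) \<Longrightarrow> vars (sum f A) \<subseteq> S"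
  by (induction A rule: infinite_finite_induct) (simp_all add: vars_0 vars_add)

lemmas vars_intros = vars_add vars_diff vars_uminus vars_mult vars_Const vars_0 vars_1
  vars_of_nat vars_numeral vars_Var vars_power vars_sum

section \<open>Homogeneity\<close>

definition homog :: "nat \<Rightarrow> mpoly \<Rightarrow> bool" where
  "homog d p \<longleftrightarrow> (\<forall>m\<in>Poly_Mapping.keys p. mdeg m = d)"

lemma homog_add: "homog d p \<Longrightarrow> homog d q \<Longrightarrow> homog d (p + q)"
  unfolding homog_def using keys_add[of p q] by blast

lemma homog_diff: "homog d p \<Longrightarrow> homog d q \<Longrightarrow> homog d (p - q)"
  unfolding homog_def using keys_diff[of p q] by blast

lemma homog_uminus: "homog d p \<Longrightarrow> homog d (- p)"
  unfolding homog_def by (simp add: keys_uminus_pm)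

lemma homog_mult: "homog d p \<Longrightarrow> homog e q \<Longrightarrow> homog (d + e) (p * q)"
  unfolding homog_def
proof
  fix m assume h: "\<forall>m\<in>Poly_Mapping.keys p. mdeg m = d" "\<forall>m\<in>Poly_Mapping.keys q. mdeg m = e"
    and "m \<in> Poly_Mapping.keys (p*q)"
  then obtain a b where ab: "m = a + b" "a \<in> Poly_Mapping.keys p" "b \<in> Poly_Mapping.keys q"
    using keys_mult[of p q] by blast
  then show "mdeg m = d + e" using h by (simp add: mdeg_add)
qed

lemma homog_mult': "homog d p \<Longrightarrow> homog e q \<Longrightarrow> d + e = n \<Longrightarrow> homog n (p * q)"
  using homog_mult by blast

lemma homog_Const: "homog 0 (Const c)"
  unfolding homog_def Const_def by auto

lemma homog_0: "homog d 0"
  unfolding homog_def by auto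

lemma homog_Var: "homog 1 (Var i)"
  unfolding homog_def Var_def by auto

lemma homog_power: "homog d p \<Longrightarrow> homog (n * d) (p ^ n)"
proof (induction n)
  case 0
  then show ?case using homog_Const[of 1] by simp
next
  case (Suc n)
  then show ?case using homog_mult[of d p "n*d" "p^n"] by (simp add: add.commute)
qed

lemma homog_power': "homog d p \<Longrightarrow> n * d = e \<Longrightarrow> homog e (p ^ n)"
  using homog_power by blast

lemma homog_of_nat_mult: "homog d p \<Longrightarrow> homog d (of_nat n * p)"
  using homog_mult[OF homog_Const[of "of_nat n"], of d p] by (simp add: Const_of_nat)

lemma homog_Const_mult: "homog d p \<Longrightarrow> homog d (Const c * p)"
  using homog_mult[OF homog_Const[of c], of d p] by simp

definition hc :: "nat \<Rightarrow> mpoly \<Rightarrow> mpoly" where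
  "hc d p = Abs_poly_mapping (\<lambda>m. if mdeg m = d then Poly_Mapping.lookup p m else 0)"

lemma lookup_hc: "Poly_Mapping.lookup (hc d p) m = (if mdeg m = d then Poly_Mapping.lookup p m else 0)"
proof -
  have "finite {m. (if mdeg m = d then Poly_Mapping.lookup p m else 0) \<noteq> 0}"
    by (rule finite_subset[of _ "{m. Poly_Mapping.lookup p m \<noteq> 0}"]) auto
  then show ?thesis unfolding hc_def by simp
qed

lemma hc_add: "hc d (p + q) = hc d p + hc d q"
  by (rule poly_mapping_eqI) (simp add: lookup_hc lookup_add)

lemma hc_homog: "homog d p \<Longrightarrow> hc d p = p"
  unfolding homog_def
  by (rule poly_mapping_eqI) (auto simp: lookup_hc in_keys_iff)

lemma hc_zero: "(\<forall>m\<in>Poly_Mapping.keys p. mdeg m \<noteq> d) \<Longrightarrow> hc d p = 0"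
  by (rule poly_mapping_eqI) (auto simp: lookup_hc in_keys_iff)

lemma homog_hc: "homog d (hc d p)"
  unfolding homog_def by (auto simp: lookup_hc in_keys_iff split: if_splits)

lemma hc_mult:
  assumes "homog e s"
  shows "hc (d + e) (s * A) = s * hc d A"
proof -
  define A2 where "A2 = A - hc d A"
  have A: "A = hc d A + A2" unfolding A2_def by simp
  have h1: "hc (d+e) (s * hc d A) = s * hc d A"
    by (rule hc_homog) (use homog_mult[OF assms homog_hc[of d A]] in \<open>simp add: add.commute\<close>)
  have k2: "mdeg b \<noteq> d" if "b \<in> Poly_Mapping.keys A2" for b
    using that unfolding A2_def by (auto simp: in_keys_iff lookup_minus lookup_hc)
  have h2: "hc (d+e) (s * A2) = 0"
  proof (rule hc_zero, rule ballI)
    fix m assume "m \<in> Poly_Mapping.keys (s * A2)"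
    then obtain a b where "m = a + b" "a \<in> Poly_Mapping.keys s" "b \<in> Poly_Mapping.keys A2"
      using keys_mult[of s A2] by blast
    then show "mdeg m \<noteq> d + e" using k2 assms unfolding homog_def by (auto simp: mdeg_add)
  qed
  have "hc (d+e) (s*A) = hc (d+e) (s * hc d A) + hc (d+e) (s * A2)"
    by (subst A) (simp add: distrib_left hc_add)
  then show ?thesis using h1 h2 by simp
qed

lemma homog_cancel:
  assumes "homog e s" "s \<noteq> 0" "homog (d + e) (s * A)"
  shows "homog d A"
proof -
  have z: "hc d' A = 0" if "d' \<noteq> d" for d'
  proof -
    have "s * hc d' A = hc (d' + e) (s * A)" using hc_mult[OF assms(1)] by simp
    also have "\<dots> = 0" using assms(3) that unfolding homog_def by (intro hc_zero) auto
    finally show ?thesis using assms(2) by simp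
  qed
  show ?thesis unfolding homog_def
  proof
    fix m assume m: "m \<in> Poly_Mapping.keys A"
    show "mdeg m = d"
    proof (rule ccontr)
      assume "mdeg m \<noteq> d"
      then have "Poly_Mapping.lookup (hc (mdeg m) A) m = 0" using z by simp
      then show False using m by (simp add: lookup_hc in_keys_iff)
    qed
  qed
qed

section \<open>Total degree\<close>

lemma tdeg_le_iff: "total_degree p \<le> n \<longleftrightarrow> (\<forall>m\<in>Poly_Mapping.keys p. mdeg m \<le> n)"
  unfolding total_degree_def mdeg_def[symmetric] by (subst Max_le_iff) auto

lemma key_le_tdeg: "m \<in> Poly_Mapping.keys p \<Longrightarrow> mdeg m \<le> total_degree p"
  unfolding total_degree_def mdeg_def[symmetric] by (rule Max_ge) auto

lemma tdeg_homog: "homog d p \<Longrightarrow> p \<noteq> 0 \<Longrightarrow> total_degree p = d"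
proof -
  assume h: "homog d p" and p: "p \<noteq> 0"
  then obtain m where m: "m \<in> Poly_Mapping.keys p" using keys_eq_empty[of p] by blast
  have "total_degree p \<le> d" using h by (simp add: tdeg_le_iff homog_def)
  moreover have "d \<le> total_degree p" using key_le_tdeg[OF m] h m by (simp add: homog_def)
  ultimately show ?thesis by simp
qed

lemma tdeg_add: "total_degree p \<le> n \<Longrightarrow> total_degree q \<le> n \<Longrightarrow> total_degree (p + q) \<le> n"
  unfolding tdeg_le_iff using keys_add[of p q] by blast

lemma tdeg_diff: "total_degree p \<le> n \<Longrightarrow> total_degree q \<le> n \<Longrightarrow> total_degree (p - q) \<le> n"
  unfolding tdeg_le_iff using keys_diff[of p q] by blast

lemma tdeg_uminus: "total_degree p \<le> n \<Longrightarrow> total_degree (- p) \<le> n"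
  unfolding tdeg_le_iff by (simp add: keys_uminus_pm)

lemma tdeg_mult: "total_degree p \<le> a \<Longrightarrow> total_degree q \<le> b \<Longrightarrow> a + b \<le> n \<Longrightarrow> total_degree (p * q) \<le> n"
  unfolding tdeg_le_iff
proof
  fix m assume h: "\<forall>m\<in>Poly_Mapping.keys p. mdeg m \<le> a" "\<forall>m\<in>Poly_Mapping.keys q. mdeg m \<le> b"
    "a + b \<le> n" and "m \<in> Poly_Mapping.keys (p*q)"
  then obtain x y where ab: "m = x + y" "x \<in> Poly_Mapping.keys p" "y \<in> Poly_Mapping.keys q"
    using keys_mult[of p q] by blast
  then show "mdeg m \<le> n" using h by (fastforce simp: mdeg_add)
qed

lemma tdeg_Const: "total_degree (Const c) \<le> n"
  unfolding tdeg_le_iff Const_def by auto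

lemma tdeg_0: "total_degree 0 \<le> n"
  unfolding tdeg_le_iff by auto

lemma tdeg_1: "total_degree 1 \<le> n"
  using tdeg_Const[of 1] by simp

lemma tdeg_of_nat: "total_degree (of_nat k) \<le> n"
  using tdeg_Const[of "of_nat k"] by (simp add: Const_of_nat)

lemma tdeg_numeral: "total_degree (numeral k) \<le> n"
  using tdeg_Const[of "numeral k"] by (simp add: Const_numeral)

lemma tdeg_Var: "1 \<le> n \<Longrightarrow> total_degree (Var i) \<le> n"
  unfolding tdeg_le_iff Var_def by auto

lemma tdeg_power: "total_degree p \<le> a \<Longrightarrow> k * a \<le> n \<Longrightarrow> total_degree (p ^ k) \<le> n"
proof (induction k arbitrary: n)
  case 0 then show ?case by (simp add: tdeg_1)
next
  case (Suc k)
  then show ?case unfolding power_Suc by (intro tdeg_mult[of p a "p^k" "k*a"]) auto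
qed

lemma tdeg_sum: "(\<And>x. x \<in> A \<Longrightarrow> total_degree (f x) \<le> n) \<Longrightarrow> total_degree (sum f A) \<le> n"
  by (induction A rule: infinite_finite_induct) (simp_all add: tdeg_0 tdeg_add)

lemma tdeg_prod: "(\<And>x. x \<in> A \<Longrightarrow> total_degree (f x) \<le> g x) \<Longrightarrow> sum g A \<le> n \<Longrightarrow> total_degree (prod f A) \<le> n"
proof (induction A arbitrary: n rule: infinite_finite_induct)
  case (insert x F)
  then show ?case unfolding prod.insert[OF insert(1,2)] by (intro tdeg_mult[of _ "g x" _ "sum g F"]) auto
qed (simp_all add: tdeg_1)

lemma tdeg_subst_le:
  assumes "\<And>i. total_degree (f i) \<le> 1"
  shows "total_degree (subst f p) \<le> total_degree p"
  unfolding subst_mon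
proof (rule tdeg_sum)
  fix m assume m: "m \<in> Poly_Mapping.keys p"
  have "total_degree (mon f m) \<le> mdeg m"
    unfolding mon_def mdeg_def
    by (rule tdeg_prod[where g="Poly_Mapping.lookup m"]) (auto intro: tdeg_power[OF assms])
  then show "total_degree (Const (Poly_Mapping.lookup p m) * mon f m) \<le> total_degree p"
    using key_le_tdeg[OF m] by (intro tdeg_mult[OF tdeg_Const[of _ 0]]) auto
qed

lemma tdeg_ge: "Poly_Mapping.lookup p m \<noteq> 0 \<Longrightarrow> mdeg m \<le> total_degree p"
  using key_le_tdeg by (simp add: in_keys_iff)



section \<open>Exponential series\<close>

abbreviation E :: "mpoly \<Rightarrow> mpoly fps" where "E c \<equiv> exp_ser Const c"

lemma E_nth: "E c $ n = Const (1 / fact n) * c ^ n"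
  by (simp add: exp_ser_def)

lemma Const_fact_Suc: "of_nat (Suc n) * Const (1 / fact (Suc n)) = Const (1 / fact n)"
proof -
  have "of_nat (Suc n) * Const (1 / fact (Suc n)) = Const (of_nat (Suc n) * (1 / fact (Suc n)))"
    by (simp add: Const_of_nat[symmetric] Const_mult)
  also have "of_nat (Suc n) * (1 / fact (Suc n)) = (1 / fact n :: rat)"
    by (simp add: fact_Suc field_simps del: of_nat_Suc)
  finally show ?thesis .
qed

lemma E_deriv: "fps_deriv (E c) = fps_const c * E c"
proof (rule fps_ext)
  fix n
  have "fps_deriv (E c) $ n = (of_nat (Suc n) * Const (1 / fact (Suc n))) * c ^ Suc n"
    by (simp add: E_nth mult.assoc)
  also have "\<dots> = c * (Const (1 / fact n) * c ^ n)"
    by (simp only: Const_fact_Suc) (simp add: mult_ac)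
  finally show "fps_deriv (E c) $ n = (fps_const c * E c) $ n"
    by (simp add: E_nth)
qed

lemma E_0: "E 0 = 1"
  by (rule fps_ext) (simp add: E_nth)

lemma E_add: "E a * E b = E (a + b)"
proof (rule fps_ext)
  fix n
  have "(E a * E b) $ n = (\<Sum>i=0..n. Const (1 / fact i) * a ^ i * (Const (1 / fact (n - i)) * b ^ (n - i)))"
    by (simp add: fps_mult_nth E_nth)
  also have "\<dots> = (\<Sum>i=0..n. Const (1 / fact n) * (of_nat (n choose i) * a ^ i * b ^ (n - i)))"
  proof (rule sum.cong[OF refl])
    fix i assume "i \<in> {0..n}"
    then have i: "i \<le> n" by simp
    have "(of_nat (n choose i) :: rat) = fact n / (fact i * fact (n - i))"
      using binomial_fact[OF i] by simp
    then have "(1 / fact n) * of_nat (n choose i) = (1 / fact i) * (1 / fact (n - i) :: rat)"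
      by (simp add: field_simps)
    then have "Const (1 / fact n) * of_nat (n choose i) = Const (1 / fact i) * Const (1 / fact (n - i))"
      by (simp add: Const_mult Const_of_nat[symmetric])
    then show "Const (1 / fact i) * a ^ i * (Const (1 / fact (n - i)) * b ^ (n - i)) =
        Const (1 / fact n) * (of_nat (n choose i) * a ^ i * b ^ (n - i))"
      by (simp add: algebra_simps)
  qed
  also have "\<dots> = Const (1 / fact n) * (a + b) ^ n"
    by (simp add: binomial_ring sum_distrib_left atLeast0AtMost)
  finally show "(E a * E b) $ n = E (a + b) $ n" by (simp add: E_nth)
qed

definition cmap :: "rat fps \<Rightarrow> mpoly fps" where
  "cmap f = Abs_fps (\<lambda>n. Const (f $ n))"

lemma cmap_nth [simp]: "cmap f $ n = Const (f $ n)"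
  by (simp add: cmap_def)

lemma cmap_mult: "cmap (f * g) = cmap f * cmap g"
  by (rule fps_ext) (simp add: fps_mult_nth Const_sum Const_mult)

lemma cmap_1: "cmap 1 = 1"
  by (rule fps_ext) simp

definition fmap :: "(nat \<Rightarrow> mpoly) \<Rightarrow> mpoly fps \<Rightarrow> mpoly fps" where
  "fmap g F = Abs_fps (\<lambda>n. subst g (F $ n))"

lemma fmap_nth [simp]: "fmap g F $ n = subst g (F $ n)"
  by (simp add: fmap_def)

lemma fmap_mult: "fmap g (F * G) = fmap g F * fmap g G"
  by (rule fps_ext) (simp add: fps_mult_nth subst_sum subst_mult)

lemma fmap_add: "fmap g (F + G) = fmap g F + fmap g G"
  by (rule fps_ext) (simp add: subst_add)

lemma fmap_diff: "fmap g (F - G) = fmap g F - fmap g G"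
  by (rule fps_ext) (simp add: subst_diff)

lemma fmap_deriv: "fmap g (fps_deriv F) = fps_deriv (fmap g F)"
  by (rule fps_ext) (simp add: subst_mult del: of_nat_Suc)

lemma fmap_const: "fmap g (fps_const c) = fps_const (subst g c)"
  by (rule fps_ext) (simp add: fps_nth_fps_const)

lemma fmap_E: "fmap g (E c) = E (subst g c)"
  by (rule fps_ext) (simp add: E_nth subst_mult subst_power)

lemma fmap_cmap: "fmap g (cmap f) = cmap f"
  by (rule fps_ext) simp

lemma fmap_X: "fmap g fps_X = fps_X"
  by (rule fps_ext) (simp add: fps_X_def)

definition fvars :: "nat set \<Rightarrow> mpoly fps \<Rightarrow> bool" where
  "fvars S F \<longleftrightarrow> (\<forall>n. vars (F $ n) \<subseteq> S)"

lemma fvars_mult: "fvars S F \<Longrightarrow> fvars S G \<Longrightarrow> fvars S (F * G)"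
  unfolding fvars_def by (simp add: fps_mult_nth vars_sum vars_mult)

lemma fvars_add: "fvars S F \<Longrightarrow> fvars S G \<Longrightarrow> fvars S (F + G)"
  unfolding fvars_def by (simp add: vars_add)

lemma fvars_diff: "fvars S F \<Longrightarrow> fvars S G \<Longrightarrow> fvars S (F - G)"
  unfolding fvars_def by (simp add: vars_diff)

lemma fvars_const: "vars c \<subseteq> S \<Longrightarrow> fvars S (fps_const c)"
  unfolding fvars_def by (simp add: fps_nth_fps_const vars_0)

lemma fvars_E: "vars c \<subseteq> S \<Longrightarrow> fvars S (E c)"
  unfolding fvars_def by (simp add: E_nth vars_mult vars_Const vars_power)

lemma fvars_cmap: "fvars S (cmap f)"
  unfolding fvars_def by (simp add: vars_Const)

lemma fvars_deriv: "fvars S F \<Longrightarrow> fvars S (fps_deriv F)"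
  unfolding fvars_def by (simp add: vars_mult vars_of_nat del: of_nat_Suc)

lemma fvars_X: "fvars S fps_X"
  unfolding fvars_def by (simp add: fps_X_def vars_0 vars_1)

definition dbound :: "nat \<Rightarrow> mpoly fps \<Rightarrow> bool" where
  "dbound c F \<longleftrightarrow> (\<forall>n. total_degree (F $ n) \<le> n + c)"

lemma dbound_mult: "dbound c1 F \<Longrightarrow> dbound c2 G \<Longrightarrow> dbound (c1 + c2) (F * G)"
  unfolding dbound_def fps_mult_nth
proof (intro allI tdeg_sum)
  fix n x :: nat assume F: "\<forall>n. total_degree (F $ n) \<le> n + c1" and G: "\<forall>n. total_degree (G $ n) \<le> n + c2"
    and x: "x \<in> {0..n}"
  show "total_degree (F $ x * G $ (n - x)) \<le> n + (c1 + c2)"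
    by (rule tdeg_mult[where a="x + c1" and b="n - x + c2"]) (use F[rule_format, of x] G[rule_format, of "n-x"] x in auto)
qed

lemma dbound_mono: "dbound c F \<Longrightarrow> c \<le> d \<Longrightarrow> dbound d F"
  unfolding dbound_def
proof (intro allI)
  fix n assume "\<forall>n. total_degree (F $ n) \<le> n + c" "c \<le> d"
  then show "total_degree (F $ n) \<le> n + d"
    using le_trans[of "total_degree (F $ n)" "n + c" "n + d"] by simp
qed

lemma dbound_add: "dbound c F \<Longrightarrow> dbound c G \<Longrightarrow> dbound c (F + G)"
  unfolding dbound_def by (simp add: tdeg_add)

lemma dbound_diff: "dbound c F \<Longrightarrow> dbound c G \<Longrightarrow> dbound c (F - G)"
  unfolding dbound_def by (simp add: tdeg_diff)

lemma dbound_const_mult: "total_degree p \<le> e \<Longrightarrow> dbound c F \<Longrightarrow> dbound (c + e) (fps_const p * F)"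
  unfolding dbound_def by (auto intro: tdeg_mult)

lemma dbound_deriv: "dbound c F \<Longrightarrow> dbound (c + 1) (fps_deriv F)"
  unfolding dbound_def
proof (intro allI)
  fix n assume F: "\<forall>n. total_degree (F $ n) \<le> n + c"
  show "total_degree (fps_deriv F $ n) \<le> n + (c + 1)"
    unfolding fps_deriv_nth
    by (rule tdeg_mult[OF tdeg_of_nat[of _ 0], where b="Suc n + c"]) (use F[rule_format, of "Suc n"] in auto)
qed

lemma dbound_E: "total_degree c \<le> 1 \<Longrightarrow> dbound 0 (E c)"
  unfolding dbound_def E_nth
  by (auto intro!: tdeg_mult[OF tdeg_Const[of _ 0]] tdeg_power)

lemma dbound_cmap: "dbound 0 (cmap f)"
  unfolding dbound_def by (simp add: tdeg_Const)



abbreviation hf :: mpoly where "hf \<equiv> Const (1/2)"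

lemma hf2: "2 * hf = 1"
  by (simp add: Const_numeral[symmetric] Const_mult)

definition Gs :: "mpoly \<Rightarrow> mpoly \<Rightarrow> mpoly \<Rightarrow> mpoly fps" where
  "Gs D s w = Abs_fps (\<lambda>n. if n < 2 then 0 else D ^ (n - 2) * (s - of_nat n * w) * Const (1 / fact n))"

lemma Gs_nth: "Gs D s w $ n = (if n < 2 then 0 else D ^ (n - 2) * (s - of_nat n * w) * Const (1 / fact n))"
  by (simp add: Gs_def)

lemma Gs_eq: "fps_const (D^2) * Gs D s w =
   fps_const s * E D - fps_const (w*D) * (fps_X * E D) - fps_const s - fps_const ((s-w)*D) * fps_X"
proof (rule fps_ext)
  fix n
  consider "n = 0" | "n = 1" | m where "n = Suc (Suc m)"
    by (metis One_nat_def not0_implies_Suc)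
  then show "(fps_const (D^2) * Gs D s w) $ n =
     (fps_const s * E D - fps_const (w*D) * (fps_X * E D) - fps_const s - fps_const ((s-w)*D) * fps_X) $ n"
  proof cases
    case 1 then show ?thesis by (simp add: Gs_nth E_nth)
  next
    case 2 then show ?thesis by (simp add: Gs_nth E_nth algebra_simps)
  next
    case 3
    have f: "Const (1 / fact (Suc m)) = of_nat (Suc (Suc m)) * Const (1 / fact (Suc (Suc m)))"
      using Const_fact_Suc[of "Suc m"] by simp
    show ?thesis using 3
      by (simp add: Gs_nth E_nth f del: of_nat_Suc fact_Suc) (simp add: algebra_simps power2_eq_square)
  qed
qed

lemma ode_ring:
  fixes S L Dd W Q E1 E0 X WD SWD L1 W2 SW2 K :: "'a::comm_ring_1"
  assumes hQ: "Q = S * L + (S - W) * Dd" and hWD: "WD = W*Dd" and hSWD: "SWD = (S-W)*Dd"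
    and hL1: "L1 = L + Dd" and hW2: "W2 = W^2" and hSW2: "SW2 = (S-W)^2" and hK: "K = Dd^2"
  shows "S * (S*(L1*E1) - WD*(E1 + X*(L1*E1)) - S*(L*E0) - SWD*(E0 + X*(L*E0)))
         - Q * (S*E1 - WD*(X*E1) - S*E0 - SWD*X*E0)
       = K * (- (X * (W2 * E1 - SW2 * E0)))"
  unfolding assms by (simp add: algebra_simps power2_eq_square)

lemma group_ode:
  assumes q: "q2 = s * lam + (s - w) * D" and D: "D \<noteq> 0"
  shows "fps_const s * fps_deriv (E lam * Gs D s w) - fps_const q2 * (E lam * Gs D s w)
       = - (fps_X * (fps_const (w^2) * E (lam + D) - fps_const ((s-w)^2) * E lam))"
proof -
  let ?K = "fps_const (D^2)"
  let ?E1 = "E (lam + D)" and ?E0 = "E lam"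
  have KG: "E lam * (?K * Gs D s w) =
     fps_const s * ?E1 - fps_const (w*D) * (fps_X * ?E1) - fps_const s * ?E0 - fps_const ((s-w)*D) * fps_X * ?E0"
  proof -
    have e: "E lam * E D = ?E1" by (rule E_add)
    have "E lam * (fps_const (D^2) * Gs D s w) = fps_const s * (E lam * E D) - fps_const (w*D) * (fps_X * (E lam * E D))
       - fps_const s * E lam - fps_const ((s-w)*D) * fps_X * E lam"
      unfolding Gs_eq by (simp add: algebra_simps)
    then show ?thesis by (simp only: e)
  qed
  have dKG: "fps_deriv (E lam * (?K * Gs D s w)) =
     fps_const s * (fps_const (lam + D) * ?E1) - fps_const (w*D) * (?E1 + fps_X * (fps_const (lam + D) * ?E1))
     - fps_const s * (fps_const lam * ?E0) - fps_const ((s-w)*D) * (?E0 + fps_X * (fps_const lam * ?E0))"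
    unfolding KG by (simp add: E_deriv fps_deriv_mult_const_left) (simp add: algebra_simps)
  have "?K * (fps_const s * fps_deriv (E lam * Gs D s w) - fps_const q2 * (E lam * Gs D s w))
      = fps_const s * fps_deriv (E lam * (?K * Gs D s w)) - fps_const q2 * (E lam * (?K * Gs D s w))"
  proof -
    have c: "E lam * (?K * Gs D s w) = ?K * (E lam * Gs D s w)" by (rule mult.left_commute)
    have r: "\<And>K S Q a b :: mpoly fps. K * (S*a - Q*b) = S*(K*a) - Q*(K*b)" by (simp add: algebra_simps)
    show ?thesis unfolding c fps_deriv_mult_const_left by (rule r)
  qed
  also have "\<dots> = ?K * (- (fps_X * (fps_const (w^2) * ?E1 - fps_const ((s-w)^2) * ?E0)))"
    unfolding dKG unfolding KG
    by (rule ode_ring[where W="fps_const w" and Dd="fps_const D"]) (simp_all add: q power2_eq_square)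
  finally have eq: "?K * (fps_const s * fps_deriv (E lam * Gs D s w) - fps_const q2 * (E lam * Gs D s w)) =
     ?K * (- (fps_X * (fps_const (w^2) * ?E1 - fps_const ((s-w)^2) * ?E0)))" .
  have K0: "?K \<noteq> 0" using D by simp
  show ?thesis using eq K0 by (simp only: mult_cancel_left) blast
qed



abbreviation s0 :: mpoly where "s0 \<equiv> Xa - Xb + Xc - Xd"
abbreviation q0 :: mpoly where "q0 \<equiv> Const (1/2) * (Xa^2 - Xb^2 + Xc^2 - Xd^2)"

definition "lam4 = hf * (Xa + Xb + Xc - Xd)"
definition "lam2 = hf * (Xa - Xb + Xc + Xd)"

definition HA :: "mpoly fps" where
  "HA = E lam4 * Gs (Xd - Xa) s0 (Xa - Xb) + E lam2 * Gs (Xb - Xc) s0 (Xc - Xd)"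

definition Ac :: "nat \<Rightarrow> mpoly" where "Ac k = HA $ (k + 2)"

lemma single1_inj: "Poly_Mapping.single i (Suc 0) = Poly_Mapping.single j (Suc 0) \<longleftrightarrow> i = j"
  by (metis lookup_single_eq lookup_single_not_eq nat.simps(3))

lemma Var_neq: "i \<noteq> j \<Longrightarrow> Var i - Var j \<noteq> 0"
proof
  assume "i \<noteq> j" "Var i - Var j = 0"
  then have "Poly_Mapping.lookup (Var i - Var j) (Poly_Mapping.single i 1) = 0" by simp
  then show False using \<open>i \<noteq> j\<close> by (simp add: Var_def lookup_minus lookup_single when_def single1_inj)
qed

lemma q_group1: "q0 = s0 * lam4 + (s0 - (Xa - Xb)) * (Xd - Xa)"
proof -
  have e: "Xa^2 - Xb^2 + Xc^2 - Xd^2 = s0 * (Xa + Xb + Xc - Xd) + 2 * ((Xc - Xd) * (Xd - Xa))"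
    by (simp add: algebra_simps power2_eq_square)
  have "q0 = s0 * lam4 + (2 * hf) * ((Xc - Xd) * (Xd - Xa))"
    unfolding lam4_def by (subst e) (simp add: algebra_simps)
  then show ?thesis by (simp add: hf2)
qed

lemma q_group2: "q0 = s0 * lam2 + (s0 - (Xc - Xd)) * (Xb - Xc)"
proof -
  have e: "Xa^2 - Xb^2 + Xc^2 - Xd^2 = s0 * (Xa - Xb + Xc + Xd) + 2 * ((Xa - Xb) * (Xb - Xc))"
    by (simp add: algebra_simps power2_eq_square)
  have "q0 = s0 * lam2 + (2 * hf) * ((Xa - Xb) * (Xb - Xc))"
    unfolding lam2_def by (subst e) (simp add: algebra_simps)
  then show ?thesis by (simp add: hf2)
qed

lemma lam41: "lam4 + (Xd - Xa) = hf * (- Xa + Xb + Xc + Xd)"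
proof -
  have "lam4 + (Xd - Xa) = hf * (- Xa + Xb + Xc + Xd) + (1 - 2 * hf) * (Xd - Xa)"
    unfolding lam4_def by (simp add: algebra_simps)
  then show ?thesis by (simp add: hf2)
qed

lemma lam23: "lam2 + (Xb - Xc) = hf * (Xa + Xb - Xc + Xd)"
proof -
  have "lam2 + (Xb - Xc) = hf * (Xa + Xb - Xc + Xd) + (1 - 2 * hf) * (Xb - Xc)"
    unfolding lam2_def by (simp add: algebra_simps)
  then show ?thesis by (simp add: hf2)
qed

lemma HA_ode: "fps_const s0 * fps_deriv HA - fps_const q0 * HA =
  - (fps_X * ((fps_const ((Xa - Xb)^2) * E (hf * (- Xa + Xb + Xc + Xd)) - fps_const ((Xc - Xd)^2) * E lam4)
            + (fps_const ((Xc - Xd)^2) * E (hf * (Xa + Xb - Xc + Xd)) - fps_const ((Xa - Xb)^2) * E lam2)))"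
proof -
  note g1 = group_ode[OF q_group1 Var_neq[of 3 0]]
  note g2 = group_ode[OF q_group2 Var_neq[of 1 2]]
  have e1: "s0 - (Xa - Xb) = Xc - Xd" and e2: "s0 - (Xc - Xd) = Xa - Xb" by (simp_all add: algebra_simps)
  show ?thesis
    unfolding HA_def using g1 g2 unfolding e1 e2 lam41 lam23
    by (simp add: algebra_simps fps_deriv_add)
qed

lemma HA_nth0: "HA $ 0 = 0"
  by (simp add: HA_def Gs_nth)

lemma HA_nth1: "HA $ Suc 0 = 0"
  by (simp add: HA_def Gs_nth)

lemma Const_fact_pow2: "Const (1 / (fact k * 2 ^ k)) = Const (1 / fact k) * hf ^ k"
proof -
  have "(1 / (fact k * 2 ^ k) :: rat) = 1 / fact k * (1/2) ^ k"
    by (simp add: power_one_over)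
  then show ?thesis by (simp only: Const_mult[symmetric] Const_power[symmetric])
qed

lemma ab_rearr: "a - b + (c - d) = a - d + (c - (b::'a::ab_group_add))"
  by (simp add: algebra_simps)

lemma P_ser: "((fps_const ((Xa - Xb)^2) * E (hf * (- Xa + Xb + Xc + Xd)) - fps_const ((Xc - Xd)^2) * E lam4)
            + (fps_const ((Xc - Xd)^2) * E (hf * (Xa + Xb - Xc + Xd)) - fps_const ((Xa - Xb)^2) * E lam2)) $ k = P k"
proof -
  have c: "(fps_const c * E (hf * L)) $ k = Const (1 / fact k) * hf ^ k * (c * L ^ k)" for c L
    by (simp add: E_nth power_mult_distrib mult_ac)
  show ?thesis
    unfolding P_def Const_fact_pow2 lam4_def lam2_def fps_sub_nth fps_add_nth c
    by (simp only: right_diff_distrib distrib_left mult.assoc) (rule ab_rearr)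
qed

lemma Ac_rec: "of_nat (k + 2) * s0 * Ac k = q0 * (if k = 0 then 0 else Ac (k - 1)) - P k"
proof -
  have l: "(fps_const s0 * fps_deriv HA - fps_const q0 * HA) $ Suc k = s0 * (of_nat (k + 2) * HA $ (k + 2)) - q0 * HA $ Suc k"
    by (simp add: numeral_2_eq_2 del: of_nat_Suc)
  have h: "HA $ Suc k = (if k = 0 then 0 else Ac (k - 1))"
    by (cases k) (simp_all add: HA_nth1 Ac_def)
  have r: "(fps_const s0 * fps_deriv HA - fps_const q0 * HA) $ Suc k = - P k"
    unfolding HA_ode fps_neg_nth fps_X_mult_nth by (simp only: P_ser nat.distinct if_False diff_Suc_1)
  have e: "s0 * (of_nat (k + 2) * Ac k) - q0 * (if k = 0 then 0 else Ac (k - 1)) = - P k"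
  proof -
    have e0: "s0 * (of_nat (k + 2) * HA $ (k + 2)) - q0 * HA $ Suc k = - P k"
      by (rule trans[OF l[symmetric] r])
    have a: "Ac k = HA $ (k + 2)" by (rule Ac_def)
    show ?thesis unfolding a using e0 unfolding h .
  qed
  have g: "\<And>a b c d :: mpoly. a * (b * c) - d = - e \<Longrightarrow> b * a * c = d - e" for e
    by (simp add: algebra_simps)
  show ?thesis by (rule g[OF e])
qed

lemma vars_hf: "vars (hf * p) \<subseteq> S" if "vars p \<subseteq> S"
  by (rule vars_mult[OF vars_Const that])

lemma fvars_Gs: "vars D \<subseteq> S \<Longrightarrow> vars s \<subseteq> S \<Longrightarrow> vars w \<subseteq> S \<Longrightarrow> fvars S (Gs D s w)"
  unfolding fvars_def Gs_nth
proof (intro allI)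
  fix n :: nat assume a: "vars D \<subseteq> S" "vars s \<subseteq> S" "vars w \<subseteq> S"
  show "vars (if n < 2 then 0 else D ^ (n - 2) * (s - of_nat n * w) * Const (1 / fact n)) \<subseteq> S"
    using a by (simp add: vars_0 vars_mult vars_diff vars_power vars_of_nat vars_Const)
qed

lemma Ac_vars: "vars (Ac k) \<subseteq> {0,1,2,3}"
proof -
  have "fvars {0,1,2,3} HA"
    unfolding HA_def lam4_def lam2_def
    by (intro fvars_add fvars_mult fvars_E fvars_Gs vars_hf vars_add vars_diff vars_Var; simp)
  then show ?thesis unfolding fvars_def Ac_def by blast
qed


abbreviation Arec :: "(nat \<Rightarrow> mpoly) \<Rightarrow> bool" where
  "Arec A \<equiv> (\<forall>k. of_nat (k + 2) * (Xa - Xb + Xc - Xd) * A k =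
            Const (1/2) * (Xa^2 - Xb^2 + Xc^2 - Xd^2) * (if k = 0 then 0 else A (k - 1)) - P k)"

lemma s0_neq0: "s0 \<noteq> 0"
proof
  assume "s0 = 0"
  then have "Poly_Mapping.lookup s0 (Poly_Mapping.single 0 1) = 0" by simp
  then show False by (simp add: Var_def lookup_minus lookup_add lookup_single when_def single1_inj)
qed

lemma cancel_ns: "n \<noteq> 0 \<Longrightarrow> (s::mpoly) \<noteq> 0 \<Longrightarrow> of_nat n * s * X = of_nat n * s * Y \<Longrightarrow> X = Y"
  by (metis mult_cancel_left mult_eq_0_iff of_nat_eq_0_iff)

lemma A_unique:
  assumes "Arec A" "Arec A'"
  shows "A k = A' k"
proof (induction k)
  case 0
  have "of_nat (0 + 2) * s0 * A 0 = of_nat (0 + 2) * s0 * A' 0"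
    using assms(1)[rule_format, of 0] assms(2)[rule_format, of 0] by simp
  from cancel_ns[OF _ s0_neq0 this] show ?case by simp
next
  case (Suc k)
  have "of_nat (Suc k + 2) * s0 * A (Suc k) = of_nat (Suc k + 2) * s0 * A' (Suc k)"
    using assms(1)[rule_format, of "Suc k"] assms(2)[rule_format, of "Suc k"] Suc by simp
  from cancel_ns[OF _ s0_neq0 this] show ?case by simp
qed

lemma homog_lin: "homog 1 (Var i)" by (rule homog_Var)

lemma homog_P: "homog (k + 2) (P k)"
  unfolding P_def
  by (intro homog_Const_mult homog_add homog_mult'[where d=2 and e=k] homog_diff homog_power'[where d=1]
      homog_uminus homog_Var; simp)

lemma homog_q0: "homog 2 q0"
  by (intro homog_Const_mult homog_add homog_diff homog_power'[where d=1] homog_Var; simp)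

lemma homog_s0: "homog 1 s0"
  by (intro homog_add homog_diff homog_Var)

lemma homog_of_nat_cancel:
  assumes "homog d (of_nat n * X)" "n \<noteq> 0"
  shows "homog d X"
proof -
  have "X = Const (1 / of_nat n) * (of_nat n * X)"
    using assms(2) by (simp add: Const_of_nat[symmetric] mult.assoc[symmetric] Const_mult)
  then show ?thesis using homog_Const_mult[OF assms(1)] by metis
qed

lemma A_homog:
  assumes "Arec A"
  shows "homog (k + 1) (A k)"
proof (induction k)
  case 0
  have e: "of_nat 2 * (s0 * A 0) = - P 0" using assms[rule_format, of 0]
    by (simp only: mult.assoc simp_thms(6) if_True mult_zero_right diff_0 add_0)
  have "homog 2 (of_nat 2 * (s0 * A 0))" unfolding e by (rule homog_uminus) (use homog_P[of 0] in \<open>simp add: numeral_2_eq_2\<close>)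
  then have "homog 2 (s0 * A 0)" by (rule homog_of_nat_cancel) simp
  then have "homog (0 + 1 + 1) (s0 * A 0)" by (simp add: numeral_2_eq_2)
  then show ?case using homog_cancel[OF homog_s0 s0_neq0] by blast
next
  case (Suc k)
  have e: "of_nat (Suc k + 2) * (s0 * A (Suc k)) = q0 * A k - P (Suc k)"
    using assms[rule_format, of "Suc k"] by (simp only: mult.assoc nat.distinct if_False diff_Suc_1)
  have "homog (Suc k + 2) (q0 * A k - P (Suc k))"
    by (intro homog_diff homog_mult'[OF homog_q0 Suc] homog_P) simp
  then have "homog (Suc k + 2) (of_nat (Suc k + 2) * (s0 * A (Suc k)))" unfolding e .
  then have "homog (Suc k + 2) (s0 * A (Suc k))" by (rule homog_of_nat_cancel) simp
  then have "homog (Suc k + 1 + 1) (s0 * A (Suc k))" by (simp add: numeral_2_eq_2)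
  then show ?case using homog_cancel[OF homog_s0 s0_neq0] by blast
qed


lemma sq_id: "Xa^2 - Xb^2 + Xc^2 - (Xa + Xc - Xb)^2 = 2 * ((Xa - Xb) * (Xb - Xc))"
  by (simp add: algebra_simps power2_eq_square)


definition "L1 = - Xa + Xb + Xc + Xd"
definition "L2 = Xa - Xb + Xc + Xd"
definition "L3 = Xa + Xb - Xc + Xd"
definition "L4 = Xa + Xb + Xc - Xd"
definition "xx = Xa - Xb"
definition "yy = Xc - Xd"

lemma P_alt: "P k = Const (1 / (fact k * 2 ^ k)) * (xx^2 * (L1^k - L2^k) + yy^2 * (L3^k - L4^k))"
  unfolding P_def L1_def L2_def L3_def L4_def xx_def yy_def ..

definition sig :: "nat \<Rightarrow> mpoly" where "sig = (\<lambda>i. if i = 3 then Xa + Xc - Xb else Var i)"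

lemma sig_at [simp]: "sig 0 = Xa" "sig 1 = Xb" "sig (Suc 0) = Xb" "sig 2 = Xc" "sig 3 = Xa + Xc - Xb"
  by (simp_all add: sig_def)

lemma sig_vals:
  "subst sig L1 = 2 * Xc" "subst sig L2 = 2 * (Xa + Xc - Xb)" "subst sig L3 = 2 * Xa" "subst sig L4 = 2 * Xb"
  "subst sig xx = Xa - Xb" "subst sig yy = Xb - Xa" "subst sig s0 = 0" "subst sig q0 = (Xa - Xb) * (Xb - Xc)"
proof -
  show "subst sig L1 = 2 * Xc" unfolding L1_def by (simp add: subst_simps; simp add: algebra_simps mult_2)
  show "subst sig L2 = 2 * (Xa + Xc - Xb)" unfolding L2_def by (simp add: subst_simps; simp add: algebra_simps mult_2)
  show "subst sig L3 = 2 * Xa" unfolding L3_def by (simp add: subst_simps; simp add: algebra_simps mult_2)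
  show "subst sig L4 = 2 * Xb" unfolding L4_def by (simp add: subst_simps; simp add: algebra_simps mult_2)
  show "subst sig xx = Xa - Xb" unfolding xx_def by (simp add: subst_simps)
  show "subst sig yy = Xb - Xa" unfolding yy_def by (simp add: subst_simps)
  show "subst sig s0 = 0" by (simp add: subst_simps)
  note e = sq_id
  have "subst sig q0 = hf * (Xa^2 - Xb^2 + Xc^2 - (Xa + Xc - Xb)^2)"
    by (simp add: subst_simps)
  also have "\<dots> = (hf * 2) * ((Xa - Xb) * (Xb - Xc))" by (simp only: e mult.assoc)
  finally have "subst sig q0 = (hf * 2) * ((Xa - Xb) * (Xb - Xc))" .
  then show "subst sig q0 = (Xa - Xb) * (Xb - Xc)" using hf2 by (simp add: mult.commute)
qed

lemma gen1:
  fixes h t Z x2 y2 a b c m :: "'a::comm_ring_1"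
  assumes "h^n * t^n = 1"
  shows "Z * h^n * (x2 * ((t*c)^n - (t*m)^n) + y2 * ((t*a)^n - (t*b)^n)) = Z * (x2 * (c^n - m^n) + y2 * (a^n - b^n))"
proof -
  have "Z * h^n * (x2 * ((t*c)^n - (t*m)^n) + y2 * ((t*a)^n - (t*b)^n)) = Z * (h^n * t^n) * (x2 * (c^n - m^n) + y2 * (a^n - b^n))"
    by (simp add: power_mult_distrib algebra_simps)
  then show ?thesis using assms by simp
qed

lemma P_sig: "subst sig (P n) = Const (1 / fact n) * ((Xa - Xb)^2 * (Xc^n - (Xa + Xc - Xb)^n) + (Xa - Xb)^2 * (Xa^n - Xb^n))"
proof -
  have "subst sig (P n) = Const (1 / (fact n * 2 ^ n)) * ((subst sig xx)^2 * ((subst sig L1)^n - (subst sig L2)^n) + (subst sig yy)^2 * ((subst sig L3)^n - (subst sig L4)^n))"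
    unfolding P_alt by (simp only: subst_mult subst_add subst_diff subst_power subst_Const)
  also have "\<dots> = Const (1 / fact n) * hf ^ n * ((Xa - Xb)^2 * ((2 * Xc)^n - (2 * (Xa + Xc - Xb))^n) + (Xa - Xb)^2 * ((2 * Xa)^n - (2 * Xb)^n))"
    unfolding sig_vals Const_fact_pow2 by (simp add: power2_commute)
  also have "\<dots> = Const (1 / fact n) * ((Xa - Xb)^2 * (Xc^n - (Xa + Xc - Xb)^n) + (Xa - Xb)^2 * (Xa^n - Xb^n))"
    by (rule gen1) (simp add: power_mult_distrib[symmetric] mult.commute[of hf] hf2)
  finally show ?thesis .
qed

lemma A_sigma:
  assumes "Arec A"
  shows "(Xb - Xc) * subst sig (A k) = Const (1 / fact (k + 1)) * (Xa - Xb) *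
                 (Xa ^ (k + 1) - Xb ^ (k + 1) + Xc ^ (k + 1) - (Xa + Xc - Xb) ^ (k + 1))"
proof -
  have e: "of_nat (Suc k + 2) * s0 * A (Suc k) = q0 * A k - P (Suc k)"
    using assms[rule_format, of "Suc k"] by (simp only: nat.distinct if_False diff_Suc_1)
  have "subst sig (of_nat (Suc k + 2) * s0 * A (Suc k)) = subst sig (q0 * A k - P (Suc k))"
    by (simp only: e)
  moreover have "subst sig (of_nat (Suc k + 2) * s0 * A (Suc k)) = 0"
    by (simp only: subst_mult[of sig "of_nat (Suc k + 2) * s0"] subst_mult[of sig "of_nat (Suc k + 2)" s0] sig_vals mult_zero_right mult_zero_left)
  moreover have "subst sig (q0 * A k - P (Suc k)) = subst sig q0 * subst sig (A k) - subst sig (P (Suc k))"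
    by (simp only: subst_diff[of sig "q0 * A k"] subst_mult[of sig q0])
  ultimately have "0 = (Xa - Xb) * (Xb - Xc) * subst sig (A k) - subst sig (P (Suc k))"
    by (simp only: sig_vals)
  then have "(Xa - Xb) * ((Xb - Xc) * subst sig (A k)) = (Xa - Xb) * (Const (1 / fact (k + 1)) * (Xa - Xb) *
                 (Xa ^ (k + 1) - Xb ^ (k + 1) + Xc ^ (k + 1) - (Xa + Xc - Xb) ^ (k + 1)))"
    unfolding P_sig by (simp add: algebra_simps power2_eq_square)
  then show ?thesis using Var_neq[of 0 1] by simp
qed


definition evp :: "nat \<Rightarrow> mpoly" where "evp i = Const (if i = 0 \<or> i = 2 then 1 else 0)"

lemma evp_at [simp]: "evp 0 = 1" "evp 1 = 0" "evp (Suc 0) = 0" "evp 2 = 1"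
  by (simp_all add: evp_def)

lemma A_nonzero:
  assumes "Arec A" "k \<ge> 1"
  shows "A k \<noteq> 0"
proof
  assume A0: "A k = 0"
  let ?n = "k + 1"
  have "Const (1 / fact ?n) * (Xa - Xb) * (Xa ^ ?n - Xb ^ ?n + Xc ^ ?n - (Xa + Xc - Xb) ^ ?n) = 0"
    using A_sigma[OF assms(1), of k] A0 by simp
  then have "subst evp (Const (1 / fact ?n) * (Xa - Xb) * (Xa ^ ?n - Xb ^ ?n + Xc ^ ?n - (Xa + Xc - Xb) ^ ?n)) = 0"
    by (metis subst_0)
  then have "Const (1 / fact ?n) * (2 - 2 ^ ?n) = 0"
    by (simp add: subst_simps)
  moreover have "(2::mpoly) - 2 ^ ?n = Const (2 - 2 ^ ?n)"
    by (simp only: Const_diff[symmetric] Const_power Const_numeral)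
  ultimately have "Const (1 / fact ?n * (2 - 2 ^ ?n)) = 0"
    by (simp add: Const_mult)
  then have "(2::rat) ^ ?n = 2" by simp
  moreover have "(2::rat) ^ ?n \<ge> 2 ^ 2"
    using assms(2) by (intro power_increasing) auto
  ultimately show False by simp
qed

lemma A_degree:
  assumes "Arec A" "k \<ge> 1"
  shows "total_degree (A k) = k + 1"
  by (rule tdeg_homog[OF A_homog[OF assms(1)] A_nonzero[OF assms]])



section \<open>The rational series sinh(z/2)/z and its inverse\<close>

definition Sq :: "rat fps" where
  "Sq = Abs_fps (\<lambda>n. if even n then 1 / (2 ^ (n+1) * fact (n+1)) else 0)"

definition MQ :: "rat fps" where "MQ = inverse Sq"

lemma Sq_nth: "Sq $ n = (if even n then 1 / (2 ^ (n+1) * fact (n+1)) else 0)"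
  by (simp add: Sq_def)

lemma MQ_Sq: "MQ * Sq = 1"
  unfolding MQ_def by (rule inverse_mult_eq_1) (simp add: Sq_nth)

lemma sinh_half_id: "sinh_half id = fps_X * Sq"
  by (rule fps_ext) (auto simp: sinh_half_def Sq_nth fps_X_mult_nth)

lemma sinh_half_Const: "sinh_half Const = fps_X * cmap Sq"
  by (rule fps_ext) (auto simp: sinh_half_def Sq_nth fps_X_mult_nth)

lemma beta_eq: "beta k = MQ $ k / 2"
proof -
  have sh0: "sinh_half (id :: rat \<Rightarrow> rat) \<noteq> 0"
  proof
    assume "sinh_half (id :: rat \<Rightarrow> rat) = 0"
    then have "sinh_half (id :: rat \<Rightarrow> rat) $ 1 = 0" by simp
    then show False by (simp add: sinh_half_def)
  qed
  have "(THE f. f * sinh_half id = fps_const (1/2) * fps_X) = fps_const (1/2) * MQ"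
  proof (rule the_equality)
    show "fps_const (1/2) * MQ * sinh_half id = fps_const (1/2) * fps_X"
      unfolding sinh_half_id using MQ_Sq by (simp add: mult_ac)
  next
    fix f assume "f * sinh_half id = fps_const (1/2) * (fps_X :: rat fps)"
    moreover have "fps_const (1/2) * MQ * sinh_half id = fps_const (1/2) * fps_X"
      unfolding sinh_half_id using MQ_Sq by (simp add: mult_ac)
    ultimately have "f * sinh_half id = fps_const (1/2) * MQ * sinh_half id" by simp
    then show "f = fps_const (1/2) * MQ" using sh0 by simp
  qed
  then show ?thesis unfolding beta_def by simp
qed

lemma MQ_nth: "MQ $ k = 2 * beta k"
  by (simp add: beta_eq)

lemma MQ_012: "MQ $ 0 = 2" "MQ $ 1 = 0" "MQ $ 2 = -1/12"
proof -
  have c: "(MQ * Sq) $ n = (if n = 0 then 1 else 0)" for n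
    using MQ_Sq by simp
  have S: "Sq $ 0 = 1/2" "Sq $ 1 = 0" "Sq $ 2 = 1/48"
    by (simp_all add: Sq_nth fact_numeral)
  have m0: "MQ $ 0 = 2" using c[of 0] S by simp
  have m1: "MQ $ 1 = 0" using c[of 1] S m0 by (simp add: fps_mult_nth_1)
  have "(MQ * Sq) $ 2 = MQ $ 0 * Sq $ 2 + MQ $ 1 * Sq $ 1 + MQ $ 2 * Sq $ 0"
    by (simp add: fps_mult_nth numeral_2_eq_2)
  then have "MQ $ 2 = -1/12" using c[of 2] S m0 m1 by simp
  then show "MQ $ 0 = 2" "MQ $ 1 = 0" "MQ $ 2 = -1/12" using m0 m1 by auto
qed

lemma beta_012: "beta 0 = 1" "beta 1 = 0" "beta 2 = -1/24"
  using MQ_012 by (simp_all add: beta_eq)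



abbreviation xd :: mpoly where "xd \<equiv> Xa - Xb"

definition Ehat :: "mpoly fps" where
  "Ehat = Abs_fps (\<lambda>n. Const (1 / fact (n+1)) * (- xd) ^ n)"

lemma Ehat_nth: "Ehat $ n = Const (1 / fact (n+1)) * (- xd) ^ n"
  by (simp add: Ehat_def)

definition Ft :: "mpoly fps" where "Ft = Ehat * cmap MQ"

lemma one_minus_E: "1 - E (- xd) = fps_const xd * (fps_X * Ehat)"
proof (rule fps_ext)
  fix n show "(1 - E (- xd)) $ n = (fps_const xd * (fps_X * Ehat)) $ n"
  proof (cases n)
    case 0 then show ?thesis by (simp add: E_nth)
  next
    case (Suc m) then show ?thesis by (simp add: E_nth Ehat_nth algebra_simps)
  qed
qed

lemma sinh_half_Const_neq0: "sinh_half Const \<noteq> 0"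
proof
  assume "sinh_half Const = 0"
  then have "sinh_half Const $ 1 = 0" by simp
  then show False by (simp add: sinh_half_def)
qed

lemma Rquot_eq: "Rquot = fps_const xd * Ft"
proof -
  have sol: "fps_const xd * Ft * sinh_half Const = 1 - E (- xd)"
  proof -
    have "fps_const xd * Ft * sinh_half Const = fps_const xd * (fps_X * (Ehat * cmap (MQ * Sq)))"
      unfolding Ft_def sinh_half_Const cmap_mult by (simp add: mult_ac)
    also have "\<dots> = 1 - E (- xd)" by (simp only: MQ_Sq cmap_1 mult_1_right one_minus_E)
    finally show ?thesis .
  qed
  show ?thesis unfolding Rquot_def
  proof (rule the_equality)
    show "fps_const xd * Ft * sinh_half Const = 1 - E (- xd)" by (rule sol)
  next
    fix F assume "F * sinh_half Const = 1 - E (- xd)"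
    then have "F * sinh_half Const = fps_const xd * Ft * sinh_half Const" using sol by simp
    then show "F = fps_const xd * Ft" using sinh_half_Const_neq0 by simp
  qed
qed

lemma Rop_const: "Rop (fps_const c * G) = fps_const c * Rop G"
  unfolding Rop_def Let_def by (simp add: fps_deriv_mult_const_left algebra_simps)

definition Q :: "nat \<Rightarrow> mpoly" where
  "Q k = (E (hf * xd) * Rop Ft) $ k
         - Const (2 / (3 * fact k)) * (Xa^2 + Xa * Xb + Xb^2 - Const (1/4)) * (hf * (Xa + Xb)) ^ k"

lemma R_eq: "R k = xd * (E (hf * xd) * Rop Ft) $ k"
  unfolding R_def Rquot_eq Rop_const by (simp add: mult.left_commute[of "E _"])

lemma T_eq: "T k = - xd * (Const (2 / (3 * fact k)) * (Xa^2 + Xa * Xb + Xb^2 - Const (1/4)) * (hf * (Xa + Xb)) ^ k)"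
proof -
  have "Xb * (Xb^2 - Const (1/4)) - Xa * (Xa^2 - Const (1/4)) = - xd * (Xa^2 + Xa * Xb + Xb^2 - Const (1/4))"
    by (simp add: algebra_simps power2_eq_square power3_eq_cube)
  then show ?thesis unfolding T_def by (simp add: mult_ac)
qed

lemma RT_Q: "R k + T k = xd * Q k"
  unfolding R_eq T_eq Q_def by (simp add: algebra_simps)

fun Bc :: "nat \<Rightarrow> mpoly" where
  "Bc 0 = Const (-1/2) * Q 0"
| "Bc (Suc k) = Const (1 / of_nat (k + 3)) * (hf * (Xa + Xb) * Bc k - Q (Suc k))"

lemma Bc_rec: "of_nat (k + 2) * (Xa - Xb) * Bc k =
          Const (1/2) * (Xa^2 - Xb^2) * (if k = 0 then 0 else Bc (k - 1)) - R k - T k"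
proof (cases k)
  case 0
  have "of_nat 2 * Const (-1/2) = (-1 :: mpoly)"
    by (simp add: Const_of_nat[symmetric] Const_mult Const_uminus[symmetric])
  have g: "\<And>a b c d :: mpoly. a * b * (c * d) = (a * c) * (b * d)" by (simp add: mult_ac)
  have "of_nat 2 * xd * Bc 0 = - (xd * Q 0)"
  proof -
    have "of_nat 2 * xd * Bc 0 = (of_nat 2 * Const (-1/2)) * (xd * Q 0)"
      unfolding Bc.simps by (rule g)
    then show ?thesis unfolding \<open>of_nat 2 * Const (-1/2) = (-1 :: mpoly)\<close> by simp
  qed
  then have "of_nat (0 + 2) * xd * Bc 0 = - (R 0 + T 0)" unfolding RT_Q by simp
  then show ?thesis using 0 by simp
next
  case (Suc j)
  have c: "of_nat (j + 3) * Const (1 / of_nat (j + 3)) = (1 :: mpoly)"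
    by (simp add: Const_of_nat[symmetric] Const_mult del: of_nat_add)
  have g: "\<And>a b c d :: mpoly. a * b * (c * d) = (a * c) * (b * d)" by (simp add: mult_ac)
  have e1: "Suc j + 2 = j + 3" by simp
  have "of_nat (Suc j + 2) * xd * Bc (Suc j) = of_nat (j + 3) * xd * (Const (1 / of_nat (j + 3)) * (hf * (Xa + Xb) * Bc j - Q (Suc j)))"
    unfolding e1 Bc.simps ..
  also have "\<dots> = (of_nat (j + 3) * Const (1 / of_nat (j + 3))) * (xd * (hf * (Xa + Xb) * Bc j - Q (Suc j)))"
    by (rule g)
  also have "\<dots> = hf * (xd * (Xa + Xb)) * Bc j - xd * Q (Suc j)"
    unfolding c by (simp add: algebra_simps)
  also have "\<dots> = hf * (Xa^2 - Xb^2) * Bc j - (R (Suc j) + T (Suc j))"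
    by (simp add: RT_Q power2_eq_square algebra_simps)
  finally show ?thesis using Suc by simp
qed



abbreviation Brec :: "(nat \<Rightarrow> mpoly) \<Rightarrow> bool" where
  "Brec B \<equiv> (\<forall>k. of_nat (k + 2) * (Xa - Xb) * B k =
            Const (1/2) * (Xa^2 - Xb^2) * (if k = 0 then 0 else B (k - 1)) - R k - T k)"

lemma xd_neq0: "xd \<noteq> 0" using Var_neq[of 0 1] by simp

lemma B_unique:
  assumes "Brec B"
  shows "B k = Bc k"
proof (induction k)
  case 0
  have "of_nat (0 + 2) * xd * B 0 = of_nat (0 + 2) * xd * Bc 0"
    using assms[rule_format, of 0] Bc_rec[of 0] by simp
  from cancel_ns[OF _ xd_neq0 this] show ?case by simp
next
  case (Suc k)
  have "of_nat (Suc k + 2) * xd * B (Suc k) = of_nat (Suc k + 2) * xd * Bc (Suc k)"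
    using assms[rule_format, of "Suc k"] Bc_rec[of "Suc k"] Suc by simp
  from cancel_ns[OF _ xd_neq0 this] show ?case by simp
qed

lemma Bc_Brec: "Brec Bc"
  using Bc_rec by blast

lemma fvars_Ft: "fvars {0,1} Ft"
proof -
  have "fvars {0,1} Ehat"
    unfolding fvars_def Ehat_nth by (intro allI vars_mult vars_Const vars_power vars_uminus vars_diff vars_Var) auto
  then show ?thesis unfolding Ft_def by (intro fvars_mult fvars_cmap)
qed

lemma fvars_Rop: "fvars {0,1} G \<Longrightarrow> fvars {0,1} (Rop G)"
  unfolding Rop_def Let_def
  by (intro fvars_diff fvars_mult fvars_const fvars_deriv vars_power vars_diff vars_Var; simp)

lemma vars_Q: "vars (Q k) \<subseteq> {0,1}"
proof -
  have "fvars {0,1} (E (hf * xd) * Rop Ft)"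
    by (intro fvars_mult fvars_E fvars_Rop fvars_Ft vars_hf vars_diff vars_Var; simp)
  then have "vars ((E (hf * xd) * Rop Ft) $ k) \<subseteq> {0,1}" unfolding fvars_def by blast
  then show ?thesis unfolding Q_def
    by (intro vars_diff vars_mult vars_Const vars_power vars_hf vars_add vars_Var; simp)
qed

lemma vars_Bc: "vars (Bc k) \<subseteq> {0,1}"
proof (induction k)
  case 0 show ?case unfolding Bc.simps by (intro vars_mult vars_Const vars_Q)
next
  case (Suc k) show ?case unfolding Bc.simps
    by (intro vars_mult vars_Const vars_Q vars_diff vars_hf vars_add vars_Var Suc; simp)
qed

lemma tdeg_hf: "total_degree p \<le> n \<Longrightarrow> total_degree (hf * p) \<le> n"
  by (rule tdeg_mult[OF tdeg_Const[of _ 0]]) auto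

lemma tdeg_lin: "total_degree (Var i - Var j) \<le> 1" "total_degree (Var i + Var j) \<le> 1"
  by (intro tdeg_diff tdeg_add tdeg_Var; simp)+

lemma dbound_Ft: "dbound 0 Ft"
proof -
  have "dbound 0 Ehat"
    unfolding dbound_def Ehat_nth
    by (intro allI tdeg_mult[OF tdeg_Const[of _ 0]] tdeg_power[where a=1] tdeg_uminus tdeg_lin) auto
  then show ?thesis unfolding Ft_def using dbound_mult[OF _ dbound_cmap] by fastforce
qed

lemma dbound_L: "dbound c G \<Longrightarrow> dbound (c + 1) (fps_const Xb * G - fps_deriv G)"
  by (intro dbound_diff dbound_const_mult dbound_deriv tdeg_Var) auto

lemma dbound_Rop: "dbound 0 G \<Longrightarrow> dbound 2 (Rop G)"
proof -
  assume G: "dbound 0 G"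
  have n: "0 + 1 + 1 = (2::nat)" "0 + 2 = (2::nat)" by simp_all
  have A: "dbound (0 + 1 + 1) (fps_const Xb * (fps_const Xb * G - fps_deriv G) - fps_deriv (fps_const Xb * G - fps_deriv G))"
    by (intro dbound_L G)
  have B: "dbound (0 + 2) (fps_const (xd^2) * G)"
    by (intro dbound_const_mult G tdeg_power[where a=1] tdeg_lin) auto
  show ?thesis unfolding Rop_def Let_def by (rule dbound_diff[OF A[unfolded n] B[unfolded n]])
qed

lemma tdeg_Q: "total_degree (Q k) \<le> k + 2"
proof -
  have "dbound (0 + 2) (E (hf * xd) * Rop Ft)"
    by (intro dbound_mult dbound_E dbound_Rop dbound_Ft tdeg_hf tdeg_lin)
  then have "total_degree ((E (hf * xd) * Rop Ft) $ k) \<le> k + 2" unfolding dbound_def by simp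
  moreover have "total_degree (Const (2 / (3 * fact k)) * (Xa^2 + Xa * Xb + Xb^2 - Const (1/4)) * (hf * (Xa + Xb)) ^ k) \<le> k + 2"
    by (intro tdeg_mult[where a=2 and b=k] tdeg_mult[OF tdeg_Const[of _ 0], where b=2] tdeg_diff tdeg_add
          tdeg_power[where a=1] tdeg_Var tdeg_Const tdeg_hf tdeg_lin tdeg_mult[where a=1 and b=1]) auto
  ultimately show ?thesis unfolding Q_def by (rule tdeg_diff)
qed

lemma tdeg_Bc: "total_degree (Bc k) \<le> k + 2"
proof (induction k)
  case 0 then show ?case using tdeg_Q[of 0] by (simp add: tdeg_mult[OF tdeg_Const[of _ 0]])
next
  case (Suc k)
  have "total_degree (hf * (Xa + Xb) * Bc k - Q (Suc k)) \<le> Suc k + 2"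
    by (intro tdeg_diff tdeg_Q tdeg_mult[OF _ Suc, where a=1] tdeg_hf tdeg_lin) auto
  then show ?case by (simp add: tdeg_mult[OF tdeg_Const[of _ 0]] del: of_nat_add)
qed



definition tau :: "nat \<Rightarrow> mpoly" where "tau = (\<lambda>i. if i = 1 then Xa else Var i)"

lemma tau_at [simp]: "tau 0 = Xa" "tau 1 = Xa" "tau (Suc 0) = Xa"
  by (simp_all add: tau_def)

lemma tau_xd: "subst tau xd = 0"
  by (simp add: subst_simps)

lemma tau_xd' [simp]: "subst tau (Xa - Var (Suc 0)) = 0"
  by (simp add: subst_simps)

lemma fmap_tau_Ehat: "fmap tau Ehat = 1"
proof (rule fps_ext)
  fix n show "fmap tau Ehat $ n = 1 $ n"
    by (cases n) (simp_all add: Ehat_nth subst_mult subst_power subst_uminus subst_diff)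
qed

lemma fmap_tau_Ft: "fmap tau Ft = cmap MQ"
  unfolding Ft_def fmap_mult fmap_tau_Ehat fmap_cmap by simp

definition Lt :: "mpoly fps \<Rightarrow> mpoly fps" where "Lt H = fps_const Xa * H - fps_deriv H"

lemma fmap_tau_Rop: "fmap tau (Rop Ft) = Lt (Lt (cmap MQ))"
proof -
  have x2: "subst tau (xd^2) = 0" by (simp add: subst_power subst_diff)
  show ?thesis
    unfolding Rop_def Let_def Lt_def
    by (simp only: fmap_diff fmap_mult fmap_const fmap_deriv fmap_tau_Ft x2 subst_Var tau_at
        fps_const_0_eq_0 mult_zero_left diff_0_right)
qed

lemma tau_coeff: "subst tau ((E (hf * xd) * Rop Ft) $ k) = Lt (Lt (cmap MQ)) $ k"
proof -
  have "subst tau ((E (hf * xd) * Rop Ft) $ k) = fmap tau (E (hf * xd) * Rop Ft) $ k" by simp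
  also have "\<dots> = (E (subst tau (hf * xd)) * Lt (Lt (cmap MQ))) $ k"
    by (simp only: fmap_mult fmap_E fmap_tau_Rop)
  also have "\<dots> = Lt (Lt (cmap MQ)) $ k"
    by (simp add: subst_mult tau_xd E_0)
  finally show ?thesis .
qed

lemma LL_nth: "Lt (Lt (cmap M)) $ k = Xa * (Xa * Const (M $ k) - of_nat (k+1) * Const (M $ (k+1)))
   - of_nat (k+1) * (Xa * Const (M $ (k+1)) - of_nat (k+2) * Const (M $ (k+2)))"
  unfolding Lt_def by (simp add: numeral_2_eq_2 del: of_nat_Suc) (simp add: algebra_simps)

lemma hf_XaXa: "hf * (Xa + Xa) = Xa"
  using hf2 by (simp add: mult_2[symmetric] mult.assoc[symmetric] mult.commute[of hf])

lemma tauQ: "subst tau (Q k) = Xa * (Xa * Const (MQ $ k) - of_nat (k+1) * Const (MQ $ (k+1)))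
   - of_nat (k+1) * (Xa * Const (MQ $ (k+1)) - of_nat (k+2) * Const (MQ $ (k+2)))
   - Const (2 / (3 * fact k)) * (3 * Xa^2 - Const (1/4)) * Xa ^ k"
proof -
  have "subst tau (Const (2 / (3 * fact k)) * (Xa^2 + Xa * Xb + Xb^2 - Const (1/4)) * (hf * (Xa + Xb)) ^ k)
      = Const (2 / (3 * fact k)) * (Xa^2 + Xa * Xa + Xa^2 - Const (1/4)) * (hf * (Xa + Xa)) ^ k"
    by (simp add: subst_simps)
  also have "\<dots> = Const (2 / (3 * fact k)) * (3 * Xa^2 - Const (1/4)) * Xa ^ k"
    unfolding hf_XaXa by (simp add: power2_eq_square algebra_simps)
  finally have c: "subst tau (Const (2 / (3 * fact k)) * (Xa^2 + Xa * Xb + Xb^2 - Const (1/4)) * (hf * (Xa + Xb)) ^ k)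
      = Const (2 / (3 * fact k)) * (3 * Xa^2 - Const (1/4)) * Xa ^ k" .
  show ?thesis unfolding Q_def subst_diff[of tau "(E (hf * xd) * Rop Ft) $ k"] tau_coeff LL_nth c ..
qed

lemma tauBc_Suc: "subst tau (Bc (Suc k)) = Const (1 / of_nat (k + 3)) * (Xa * subst tau (Bc k) - subst tau (Q (Suc k)))"
proof -
  have h: "subst tau (hf * (Xa + Xb)) = Xa" by (simp add: subst_simps hf_XaXa mult.commute[of hf] hf2)
  show ?thesis
    unfolding Bc.simps subst_mult[of tau "Const (1 / of_nat (k + 3))"] subst_Const
      subst_diff[of tau "hf * (Xa + Xb) * Bc k"] subst_mult[of tau "hf * (Xa + Xb)" "Bc k"] h ..
qed



definition fB :: "nat \<Rightarrow> mpoly" where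
  "fB k = Const (of_nat (k * (k + 3)) / fact (k + 2)) * Xa ^ (k + 2)
                 - Const (1 / (12 * fact k)) * Xa ^ k
                 + Const (2 * beta (k + 1)) * Xa
                 - Const (2 * of_nat (k + 1) * beta (k + 2))"

lemma step_ring:
  fixes u P0 r c1 c2 c3 c4 m1 m2 m3 t q A1 A2 A3 A4 N2 N3 :: "'a::comm_ring_1"
  assumes h1: "A1 = r * (c1 + 3 * t)" and h2: "A2 = r * (c2 + t * q)" and h3: "c3 = m1"
    and h4: "A3 = r * (2 * N2 * m2 - c4)" and h5: "A4 = r * (N2 * N3 * m3)"
  shows "A1 * (u^2 * (u * P0)) - A2 * (u * P0) + A3 * u - A4 =
         r * (u * (c1 * (u^2 * P0) - c2 * P0 + c3 * u - c4)
              - (u * (u * m1 - N2 * m2) - N2 * (u * m2 - N3 * m3) - t * (3 * u^2 - q) * (u * P0)))"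
  unfolding assms by (simp add: algebra_simps power2_eq_square)

lemma Const_ofnat_mult: "Const a * of_nat n = Const (a * of_nat n)"
  by (simp add: Const_of_nat[symmetric] Const_mult)

lemma tauBc_0: "subst tau (Bc 0) = fB 0"
proof -
  have q0: "subst tau (Q 0) = Xa * (Xa * Const 2 - of_nat 1 * Const 0) - of_nat 1 * (Xa * Const 0 - of_nat 2 * Const (-1/12))
     - Const (2 / 3) * (3 * Xa^2 - Const (1/4)) * 1"
    unfolding tauQ using MQ_012 by (simp add: numeral_2_eq_2)
  have a: "Const (2/3) * 3 = (2::mpoly)" by (simp add: Const_numeral[symmetric] Const_mult)
  have b: "of_nat 2 * Const (-1/12) + Const (2/3) * Const (1/4) = (0::mpoly)"
    by (simp add: Const_of_nat[symmetric] Const_mult Const_add)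
  have c: "Const 2 = (2::mpoly)" by (simp add: Const_numeral)
  have br: "\<And>X C23 Cm Cq :: mpoly. C23 * 3 = 2 \<Longrightarrow> 2 * Cm + C23 * Cq = 0 \<Longrightarrow>
      X * (X * 2 - 1 * 0) - 1 * (X * 0 - 2 * Cm) - C23 * (3 * X^2 - Cq) * 1 = 0"
  proof -
    fix X C23 Cm Cq :: mpoly assume h: "C23 * 3 = 2" "2 * Cm + C23 * Cq = 0"
    have "X * (X * 2 - 1 * 0) - 1 * (X * 0 - 2 * Cm) - C23 * (3 * X^2 - Cq) * 1
        = X^2 * (2 - C23 * 3) + (2 * Cm + C23 * Cq)"
      by (simp add: algebra_simps power2_eq_square)
    then show "X * (X * 2 - 1 * 0) - 1 * (X * 0 - 2 * Cm) - C23 * (3 * X^2 - Cq) * 1 = 0"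
      using h by simp
  qed
  have "subst tau (Q 0) = 0" unfolding q0 c Const_0 of_nat_1 of_nat_numeral
    by (rule br[OF a]) (use b in simp)

  moreover have "fB 0 = 0"
    unfolding fB_def using beta_012 by (simp add: Const_diff[symmetric] Const_add numeral_2_eq_2 Const_uminus)
  ultimately show ?thesis by (simp add: subst_mult)
qed

lemma rat_id1:
  fixes x F :: rat assumes "x \<ge> 0" "F > 0"
  shows "(x+1)*(x+4) / ((x+3)*(x+2)*(x+1)*F) = 1/(x+3) * (x*(x+3) / ((x+2)*(x+1)*F) + 3*(2/(3*((x+1)*F))))"
proof -
  have nz: "x + 1 \<noteq> 0" "x + 2 \<noteq> 0" "x + 3 \<noteq> 0" "F \<noteq> 0" using assms by auto
  show ?thesis using nz by (simp add: divide_simps) (simp add: algebra_simps)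
qed
lemma rat_id2:
  fixes x F :: rat assumes "x \<ge> 0" "F > 0"
  shows "1 / (12 * ((x+1)*F)) = 1/(x+3) * (1 / (12 * F) + 2 / (3 * ((x+1)*F)) * (1/4))"
proof -
  have nz: "x + 1 \<noteq> 0" "x + 2 \<noteq> 0" "x + 3 \<noteq> 0" "F \<noteq> 0" using assms by auto
  show ?thesis using nz by (simp add: divide_simps) (simp add: algebra_simps)
qed

lemma fact_ids:
  "(of_nat (Suc k * (Suc k + 3)) / fact (Suc k + 2) :: rat) =
      1 / of_nat (k + 3) * (of_nat (k * (k + 3)) / fact (k + 2) + 3 * (2 / (3 * fact (Suc k))))"
  "(1 / (12 * fact (Suc k)) :: rat) = 1 / of_nat (k + 3) * (1 / (12 * fact k) + 2 / (3 * fact (Suc k)) * (1/4))"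
proof -
  let ?x = "of_nat k :: rat" and ?F = "fact k :: rat"
  have f1: "fact (Suc k + 2) = (?x+3) * (?x+2) * (?x+1) * ?F"
    by (simp add: fact_Suc numeral_3_eq_3 numeral_2_eq_2 algebra_simps)
  have f2: "fact (k + 2) = (?x+2) * (?x+1) * ?F"
    by (simp add: fact_Suc numeral_2_eq_2 algebra_simps)
  have f3: "fact (Suc k) = (?x+1) * ?F"
    by (simp add: fact_Suc algebra_simps)
  have n1: "(of_nat (Suc k * (Suc k + 3)) :: rat) = (?x+1)*(?x+4)" by (simp add: algebra_simps)
  have n2: "(of_nat (k * (k + 3)) :: rat) = ?x*(?x+3)" by (simp add: algebra_simps)
  have n3: "(of_nat (k + 3) :: rat) = ?x + 3" by simp
  show "(of_nat (Suc k * (Suc k + 3)) / fact (Suc k + 2) :: rat) =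
      1 / of_nat (k + 3) * (of_nat (k * (k + 3)) / fact (k + 2) + 3 * (2 / (3 * fact (Suc k))))"
    unfolding f1 f2 f3 n1 n2 n3 by (rule rat_id1) simp_all
  show "(1 / (12 * fact (Suc k)) :: rat) = 1 / of_nat (k + 3) * (1 / (12 * fact k) + 2 / (3 * fact (Suc k)) * (1/4))"
    unfolding f3 n3 by (rule rat_id2) simp_all
qed

lemma tauBc: "subst tau (Bc k) = fB k"
proof (induction k)
  case 0 then show ?case by (rule tauBc_0)
next
  case (Suc k)
  let ?u = "Xa" and ?P0 = "Xa ^ k"
  let ?r = "Const (1 / of_nat (k + 3))"
  let ?c1 = "Const (of_nat (k * (k + 3)) / fact (k + 2))" and ?c2 = "Const (1 / (12 * fact k))"
  let ?c3 = "Const (2 * beta (k + 1))" and ?c4 = "Const (2 * of_nat (k + 1) * beta (k + 2))"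
  let ?m1 = "Const (MQ $ Suc k)" and ?m2 = "Const (MQ $ (Suc k + 1))" and ?m3 = "Const (MQ $ (Suc k + 2))"
  let ?t = "Const (2 / (3 * fact (Suc k)))" and ?q = "Const (1/4)"
  let ?N2 = "of_nat (Suc k + 1) :: mpoly" and ?N3 = "of_nat (Suc k + 2) :: mpoly"
  let ?A1 = "Const (of_nat (Suc k * (Suc k + 3)) / fact (Suc k + 2))" and ?A2 = "Const (1 / (12 * fact (Suc k)))"
  let ?A3 = "Const (2 * beta (Suc k + 1))" and ?A4 = "Const (2 * of_nat (Suc k + 1) * beta (Suc k + 2))"
  have fk: "fB k = ?c1 * (?u^2 * ?P0) - ?c2 * ?P0 + ?c3 * ?u - ?c4"
    unfolding fB_def by (simp add: power_add mult_ac power2_eq_square)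
  have fSk: "fB (Suc k) = ?A1 * (?u^2 * (?u * ?P0)) - ?A2 * (?u * ?P0) + ?A3 * ?u - ?A4"
    unfolding fB_def by (simp add: power_add mult_ac power2_eq_square del: of_nat_Suc)
  have tq: "subst tau (Q (Suc k)) = ?u * (?u * ?m1 - ?N2 * ?m2) - ?N2 * (?u * ?m2 - ?N3 * ?m3) - ?t * (3 * ?u^2 - ?q) * (?u * ?P0)"
    unfolding tauQ by (simp del: of_nat_Suc of_nat_add)
  have h1: "?A1 = ?r * (?c1 + 3 * ?t)"
    by (simp only: Const_numeral[symmetric] Const_mult Const_add fact_ids(1))
  have h2: "?A2 = ?r * (?c2 + ?t * ?q)"
    by (simp only: Const_mult Const_add fact_ids(2))
  have h3: "?c3 = ?m1" by (simp add: MQ_nth)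
  have h4: "?A3 = ?r * (2 * ?N2 * ?m2 - ?c4)"
  proof -
    have "2 * ?N2 * ?m2 - ?c4 = Const (2 * of_nat (Suc k + 1) * (2 * beta (k + 2)) - 2 * of_nat (k + 1) * beta (k + 2))"
      by (simp add: MQ_nth Const_numeral[symmetric] Const_of_nat[symmetric] Const_mult Const_diff del: of_nat_Suc of_nat_add)
    moreover have "(2 * beta (Suc k + 1)) = 1 / of_nat (k + 3) * (2 * of_nat (Suc k + 1) * (2 * beta (k + 2)) - 2 * of_nat (k + 1) * beta (k + 2))"
      by (simp add: field_simps; simp add: algebra_simps)
    ultimately show ?thesis by (simp only: Const_mult)
  qed
  have h5: "?A4 = ?r * (?N2 * ?N3 * ?m3)"
  proof -
    have "?N2 * ?N3 * ?m3 = Const (of_nat (Suc k + 1) * of_nat (Suc k + 2) * (2 * beta (Suc k + 2)))"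
      by (simp add: MQ_nth Const_of_nat[symmetric] Const_mult del: of_nat_Suc of_nat_add)
    moreover have "2 * of_nat (Suc k + 1) * beta (Suc k + 2) = 1 / of_nat (k + 3) * (of_nat (Suc k + 1) * of_nat (Suc k + 2) * (2 * beta (Suc k + 2)))"
      by (simp add: field_simps; simp add: algebra_simps)
    ultimately show ?thesis by (simp only: Const_mult)
  qed
  show ?case
    unfolding tauBc_Suc Suc.IH fk fSk tq
    by (rule step_ring[OF h1 h2 h3 h4 h5, symmetric])
qed



lemma Ft012: "Ft $ 0 = 2" "Ft $ 1 = - xd" "Ft $ 2 = Const (-1/12) + Const (1/6) * xd^2 * 2"
proof -
  have c2: "Const 2 = (2::mpoly)" by (simp add: Const_numeral)
  show "Ft $ 0 = 2" unfolding Ft_def using MQ_012 by (simp add: Ehat_nth c2)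
  have "Ft $ 1 = Ehat $ 0 * Const (MQ $ 1) + Ehat $ 1 * Const (MQ $ 0)"
    unfolding Ft_def by (simp add: fps_mult_nth_1)
  also have "\<dots> = (Const (1/2) * Const 2) * (- xd)"
    using MQ_012 by (simp add: Ehat_nth)
  also have "\<dots> = - xd" by (simp add: Const_mult)
  finally show "Ft $ 1 = - xd" .
  have "Ft $ 2 = Ehat $ 0 * Const (MQ $ 2) + Ehat $ 1 * Const (MQ $ 1) + Ehat $ 2 * Const (MQ $ 0)"
    unfolding Ft_def by (simp add: fps_mult_nth numeral_2_eq_2)
  then show "Ft $ 2 = Const (-1/12) + Const (1/6) * xd^2 * 2"
    using MQ_012 by (simp add: Ehat_nth c2 fact_numeral power2_commute)
qed

lemma RopFt0: "Rop Ft $ 0 = Xb * (Xb * Ft $ 0 - Ft $ 1) - (Xb * Ft $ 1 - 2 * Ft $ 2) - xd^2 * Ft $ 0"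
  unfolding Rop_def Let_def by (simp add: numeral_2_eq_2)

lemma Q0_ring:
  fixes b d c23 c16 cm12 c14 :: "'a::comm_ring_1"
  assumes "c23 * 3 = 2" "4 * c16 = c23" "2 * cm12 + c23 * c14 = 0"
  shows "b * (b * 2 - - d) - (b * - d - 2 * (cm12 + c16 * d^2 * 2)) - d^2 * 2
     - c23 * ((b + d)^2 + (b + d) * b + b^2 - c14) = - 2 * d^2"
proof -
  have "b * (b * 2 - - d) - (b * - d - 2 * (cm12 + c16 * d^2 * 2)) - d^2 * 2
     - c23 * ((b + d)^2 + (b + d) * b + b^2 - c14)
     = b^2 * (2 - c23 * 3) + b * d * (2 - c23 * 3) + d^2 * (4 * c16 - c23) - 2 * d^2 + (2 * cm12 + c23 * c14)"
    by (simp add: algebra_simps power2_eq_square)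
  then show ?thesis using assms by simp
qed

lemma Q0: "Q 0 = - 2 * xd^2"
proof -
  have e0: "E (hf * xd) $ 0 = 1" by (simp add: E_nth)
  have a: "Xa = Xb + xd" by simp
  have "Q 0 = Xb * (Xb * 2 - - xd) - (Xb * - xd - 2 * (Const (-1/12) + Const (1/6) * xd^2 * 2)) - xd^2 * 2
     - Const (2/3) * ((Xb + xd)^2 + (Xb + xd) * Xb + Xb^2 - Const (1/4))"
    unfolding Q_def fps_mult_nth_0 e0 RopFt0 Ft012 by (simp add: mult.commute[of _ 2] del: diff_add_cancel)
  also have "\<dots> = - 2 * xd^2"
    by (rule Q0_ring) (simp_all add: Const_numeral[symmetric] Const_mult Const_add)
  finally show ?thesis .
qed

lemma Bc0: "Bc 0 = xd^2"
proof -
  have "Const (-1/2) * (- 2) = (1::mpoly)"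
    by (simp add: Const_numeral[symmetric] Const_uminus Const_mult)
  moreover have "Bc 0 = (Const (-1/2) * (- 2)) * xd^2" unfolding Bc.simps Q0 by (simp only: mult.assoc)
  ultimately show ?thesis by simp
qed

lemma tdeg_Bc0: "total_degree (Bc 0) = 2"
proof -
  have h: "homog 2 (xd^2)"
    by (intro homog_power'[where d=1] homog_diff homog_Var) auto
  have "xd^2 \<noteq> 0" using xd_neq0 by simp
  then show ?thesis unfolding Bc0 using tdeg_homog[OF h] by simp
qed

lemma Xa_power: "Xa ^ n = Poly_Mapping.single (Poly_Mapping.single 0 n) 1"
proof (induction n)
  case 0 then show ?case by simp
next
  case (Suc n) then show ?case
    by (simp add: Var_def mult_single single_add[symmetric])
qed

lemma Const_single: "Const c * Poly_Mapping.single m 1 = Poly_Mapping.single m c"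
  by (simp add: Const_def mult_single)

lemma single0_eq: "Poly_Mapping.single (0::nat) n = Poly_Mapping.single 0 m \<longleftrightarrow> n = m"
  by (metis lookup_single_eq)

lemma tdeg_fB: "k \<ge> 1 \<Longrightarrow> k + 2 \<le> total_degree (fB k)"
proof -
  assume k: "k \<ge> 1"
  let ?m = "Poly_Mapping.single (0::nat) (k + 2)"
  have Xa1: "Xa = Poly_Mapping.single (Poly_Mapping.single 0 1) 1" by (simp add: Var_def)
  have fB: "fB k = Poly_Mapping.single (Poly_Mapping.single 0 (k+2)) (of_nat (k * (k + 3)) / fact (k + 2))
      - Poly_Mapping.single (Poly_Mapping.single 0 k) (1 / (12 * fact k))
      + Poly_Mapping.single (Poly_Mapping.single 0 1) (2 * beta (k + 1))
      - Poly_Mapping.single 0 (2 * of_nat (k + 1) * beta (k + 2))"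
  proof -
    have cx: "Const c * Xa = Poly_Mapping.single (Poly_Mapping.single 0 1) c" for c
      by (simp add: Var_def Const_single)
    show ?thesis unfolding fB_def Xa_power Const_single cx by (simp only: Const_def)
  qed
  have n1: "Poly_Mapping.single (0::nat) k \<noteq> ?m"
  proof
    assume "Poly_Mapping.single (0::nat) k = ?m"
    then have "Poly_Mapping.lookup (Poly_Mapping.single (0::nat) k) 0 = Poly_Mapping.lookup ?m 0" by simp
    then show False by simp
  qed
  have n2: "Poly_Mapping.single (0::nat) 1 \<noteq> ?m"
  proof
    assume "Poly_Mapping.single (0::nat) 1 = ?m"
    then have "Poly_Mapping.lookup (Poly_Mapping.single (0::nat) (1::nat)) 0 = Poly_Mapping.lookup ?m 0" by simp
    then show False by simp
  qed
  have n3: "(0 :: nat \<Rightarrow>\<^sub>0 nat) \<noteq> ?m"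
    by (metis lookup_single_eq lookup_zero add_2_eq_Suc' nat.distinct(1))
  have "Poly_Mapping.lookup (fB k) ?m = of_nat (k * (k + 3)) / fact (k + 2)"
    unfolding fB using n1 n2 n3 by (simp add: lookup_add lookup_minus lookup_single when_def)
  moreover have "(of_nat (k * (k + 3)) / fact (k + 2) :: rat) \<noteq> 0" using k by simp
  ultimately have "mdeg ?m \<le> total_degree (fB k)" by (intro tdeg_ge) simp
  then show ?thesis by simp
qed

lemma tdeg_Bc_eq: "total_degree (Bc k) = k + 2"
proof (cases "k = 0")
  case True then show ?thesis using tdeg_Bc0 by simp
next
  case False
  have "k + 2 \<le> total_degree (fB k)" using tdeg_fB False by simp
  also have "\<dots> = total_degree (subst tau (Bc k))" by (simp add: tauBc)
  also have "\<dots> \<le> total_degree (Bc k)"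
    by (rule tdeg_subst_le) (simp add: tau_def tdeg_Var)
  finally show ?thesis using tdeg_Bc[of k] by simp
qed


theorem lemma4:
  shows
  "(\<exists>!A :: nat \<Rightarrow> mpoly. \<forall>k.
        vars (A k) \<subseteq> {0, 1, 2, 3} \<and>
        of_nat (k + 2) * (Xa - Xb + Xc - Xd) * A k =
          Const (1/2) * (Xa^2 - Xb^2 + Xc^2 - Xd^2) * (if k = 0 then 0 else A (k - 1)) - P k)
   \<and> (\<exists>!B :: nat \<Rightarrow> mpoly. \<forall>k.
        vars (B k) \<subseteq> {0, 1} \<and>
        of_nat (k + 2) * (Xa - Xb) * B k =
          Const (1/2) * (Xa^2 - Xb^2) * (if k = 0 then 0 else B (k - 1)) - R k - T k)
   \<and> (\<forall>A :: nat \<Rightarrow> mpoly.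
        (\<forall>k. vars (A k) \<subseteq> {0, 1, 2, 3} \<and>
          of_nat (k + 2) * (Xa - Xb + Xc - Xd) * A k =
            Const (1/2) * (Xa^2 - Xb^2 + Xc^2 - Xd^2) * (if k = 0 then 0 else A (k - 1)) - P k)
        \<longrightarrow> (\<forall>k\<ge>1. total_degree (A k) = k + 1)
          \<and> (\<forall>k. (Xb - Xc) * subst (\<lambda>i. if i = 3 then Xa + Xc - Xb else Var i) (A k) =
                 Const (1 / fact (k + 1)) * (Xa - Xb) *
                 (Xa ^ (k + 1) - Xb ^ (k + 1) + Xc ^ (k + 1) - (Xa + Xc - Xb) ^ (k + 1))))
   \<and> (\<forall>B :: nat \<Rightarrow> mpoly.
        (\<forall>k. vars (B k) \<subseteq> {0, 1} \<and>
          of_nat (k + 2) * (Xa - Xb) * B k =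
            Const (1/2) * (Xa^2 - Xb^2) * (if k = 0 then 0 else B (k - 1)) - R k - T k)
        \<longrightarrow> (\<forall>k. total_degree (B k) = k + 2)
          \<and> (\<forall>k. subst (\<lambda>i. if i = 1 then Xa else Var i) (B k) =
                 Const (of_nat (k * (k + 3)) / fact (k + 2)) * Xa ^ (k + 2)
                 - Const (1 / (12 * fact k)) * Xa ^ k
                 + Const (2 * beta (k + 1)) * Xa
                 - Const (2 * of_nat (k + 1) * beta (k + 2))))"
proof (intro conjI)
  have ArecAc: "Arec Ac" using Ac_rec by blast
  show "\<exists>!A :: nat \<Rightarrow> mpoly. \<forall>k.
        vars (A k) \<subseteq> {0, 1, 2, 3} \<and>
        of_nat (k + 2) * (Xa - Xb + Xc - Xd) * A k =
          Const (1/2) * (Xa^2 - Xb^2 + Xc^2 - Xd^2) * (if k = 0 then 0 else A (k - 1)) - P k"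
  proof (rule ex1I[of _ Ac])
    show "\<forall>k. vars (Ac k) \<subseteq> {0, 1, 2, 3} \<and>
        of_nat (k + 2) * (Xa - Xb + Xc - Xd) * Ac k =
          Const (1/2) * (Xa^2 - Xb^2 + Xc^2 - Xd^2) * (if k = 0 then 0 else Ac (k - 1)) - P k"
      using Ac_vars Ac_rec by blast
  next
    fix A assume "\<forall>k. vars (A k) \<subseteq> {0, 1, 2, 3} \<and>
        of_nat (k + 2) * (Xa - Xb + Xc - Xd) * A k =
          Const (1/2) * (Xa^2 - Xb^2 + Xc^2 - Xd^2) * (if k = 0 then 0 else A (k - 1)) - P k"
    then have "Arec A" by blast
    then show "A = Ac" using A_unique[OF _ ArecAc] by blast
  qed
  show "\<exists>!B :: nat \<Rightarrow> mpoly. \<forall>k.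
        vars (B k) \<subseteq> {0, 1} \<and>
        of_nat (k + 2) * (Xa - Xb) * B k =
          Const (1/2) * (Xa^2 - Xb^2) * (if k = 0 then 0 else B (k - 1)) - R k - T k"
  proof (rule ex1I[of _ Bc])
    show "\<forall>k. vars (Bc k) \<subseteq> {0, 1} \<and>
        of_nat (k + 2) * (Xa - Xb) * Bc k =
          Const (1/2) * (Xa^2 - Xb^2) * (if k = 0 then 0 else Bc (k - 1)) - R k - T k"
      using vars_Bc Bc_rec by blast
  next
    fix B assume "\<forall>k. vars (B k) \<subseteq> {0, 1} \<and>
        of_nat (k + 2) * (Xa - Xb) * B k =
          Const (1/2) * (Xa^2 - Xb^2) * (if k = 0 then 0 else B (k - 1)) - R k - T k"
    then have "Brec B" by blast
    then show "B = Bc" using B_unique by blast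
  qed
  show "\<forall>A :: nat \<Rightarrow> mpoly.
        (\<forall>k. vars (A k) \<subseteq> {0, 1, 2, 3} \<and>
          of_nat (k + 2) * (Xa - Xb + Xc - Xd) * A k =
            Const (1/2) * (Xa^2 - Xb^2 + Xc^2 - Xd^2) * (if k = 0 then 0 else A (k - 1)) - P k)
        \<longrightarrow> (\<forall>k\<ge>1. total_degree (A k) = k + 1)
          \<and> (\<forall>k. (Xb - Xc) * subst (\<lambda>i. if i = 3 then Xa + Xc - Xb else Var i) (A k) =
                 Const (1 / fact (k + 1)) * (Xa - Xb) *
                 (Xa ^ (k + 1) - Xb ^ (k + 1) + Xc ^ (k + 1) - (Xa + Xc - Xb) ^ (k + 1)))"
  proof (intro allI impI)
    fix A :: "nat \<Rightarrow> mpoly"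
    assume "\<forall>k. vars (A k) \<subseteq> {0, 1, 2, 3} \<and>
          of_nat (k + 2) * (Xa - Xb + Xc - Xd) * A k =
            Const (1/2) * (Xa^2 - Xb^2 + Xc^2 - Xd^2) * (if k = 0 then 0 else A (k - 1)) - P k"
    then have AR: "Arec A" by blast
    show "(\<forall>k\<ge>1. total_degree (A k) = k + 1)
          \<and> (\<forall>k. (Xb - Xc) * subst (\<lambda>i. if i = 3 then Xa + Xc - Xb else Var i) (A k) =
                 Const (1 / fact (k + 1)) * (Xa - Xb) *
                 (Xa ^ (k + 1) - Xb ^ (k + 1) + Xc ^ (k + 1) - (Xa + Xc - Xb) ^ (k + 1)))"
      using A_degree[OF AR] A_sigma[OF AR, unfolded sig_def] by blast
  qed
  show "\<forall>B :: nat \<Rightarrow> mpoly.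
        (\<forall>k. vars (B k) \<subseteq> {0, 1} \<and>
          of_nat (k + 2) * (Xa - Xb) * B k =
            Const (1/2) * (Xa^2 - Xb^2) * (if k = 0 then 0 else B (k - 1)) - R k - T k)
        \<longrightarrow> (\<forall>k. total_degree (B k) = k + 2)
          \<and> (\<forall>k. subst (\<lambda>i. if i = 1 then Xa else Var i) (B k) =
                 Const (of_nat (k * (k + 3)) / fact (k + 2)) * Xa ^ (k + 2)
                 - Const (1 / (12 * fact k)) * Xa ^ k
                 + Const (2 * beta (k + 1)) * Xa
                 - Const (2 * of_nat (k + 1) * beta (k + 2)))"
  proof (intro allI impI)
    fix B :: "nat \<Rightarrow> mpoly"
    assume "\<forall>k. vars (B k) \<subseteq> {0, 1} \<and>
          of_nat (k + 2) * (Xa - Xb) * B k =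
            Const (1/2) * (Xa^2 - Xb^2) * (if k = 0 then 0 else B (k - 1)) - R k - T k"
    then have BR: "Brec B" by blast
    have e: "\<And>k. B k = Bc k" using B_unique[OF BR] .
    show "(\<forall>k. total_degree (B k) = k + 2)
          \<and> (\<forall>k. subst (\<lambda>i. if i = 1 then Xa else Var i) (B k) =
                 Const (of_nat (k * (k + 3)) / fact (k + 2)) * Xa ^ (k + 2)
                 - Const (1 / (12 * fact k)) * Xa ^ k
                 + Const (2 * beta (k + 1)) * Xa
                 - Const (2 * of_nat (k + 1) * beta (k + 2)))"
      unfolding e using tdeg_Bc_eq tauBc[unfolded tau_def fB_def] by blast
  qed
qed

end
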